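(* Let $\mathcal{S}$ be a finite set, $\Pi=(\pi_{xy})$ an irreducible stochastic matrix on $\mathcal{S}$, $\kappa(x,y):=\pi_{xy}-\mathbf{1}_{x=y}$, and $Q=(q(y))$ the unique invariant distribution of $\Pi$ (so $q>0$). Let $X$ be the continuous-time Markov chain $X(t)=Z_{N(t)}$, where $(Z_n)$ is a Markov chain with transition matrix $\Pi$ and initial distribution $P(0)$ with all entries positive and $N$ is an independent rate-one Poisson process; let $p(t,y):=\mathbb{P}(X(t)=y)$ and $\ell(t,y):=p(t,y)/q(y)$. Let $\mathbb{Q}$ be a probability measure under which $X$ has the same transition dynamics but $X(0)$ has distribution $Q$. Set $\widehat\kappa(x,y):=q(y)\kappa(y,x)/q(x)$. Fix $T\in(0,\infty)$, put $\widehat X(s):=X(T-s)$ and $\widehat{\mathcal{G}}(s):=\sigma(\widehat X(u),\,0\le u\le s)$ for $0\le s\le T$. Then the process $\widehat M$ defined by $$\ell^2\big(T-s,\widehat X(s)\big)=\widehat M(s)+\int_0^s\sum_{y\neq x}\widehat\kappa(x,y)\big(\ell(t,y)-\ell(t,x)\big)^2\Big|_{t=T-u,\;x=\widehat X(u)}\,\mathrm{d}u,\qquad 0\le s\le T,$$ is a martingale with respect to the filtration $(\widehat{\mathcal{G}}(s))_{0\le s\le T}$ under $\mathbb{Q}$.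
   Context: $\ell(t,\cdot)$ is the likelihood ratio of the time-$t$ law of the chain with respect to its invariant distribution; $\widehat\kappa$ are the transition rates of the time-reversed stationary chain. *)

theory Defs
  imports "HOL-Probability.Probability"
begin

definition stochastic_matrix :: "('s::finite \<Rightarrow> 's \<Rightarrow> real) \<Rightarrow> bool" where
  "stochastic_matrix Pm \<longleftrightarrow> (\<forall>x y. 0 \<le> Pm x y) \<and> (\<forall>x. (\<Sum>y\<in>UNIV. Pm x y) = 1)"

definition irreducible_matrix :: "('s \<Rightarrow> 's \<Rightarrow> real) \<Rightarrow> bool" where
  "irreducible_matrix Pm \<longleftrightarrow> (\<forall>x y. (x, y) \<in> {(a, b). 0 < Pm a b}\<^sup>*)"

definition prob_vector :: "('s::finite \<Rightarrow> real) \<Rightarrow> bool" where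
  "prob_vector p \<longleftrightarrow> (\<forall>x. 0 \<le> p x) \<and> (\<Sum>x\<in>UNIV. p x) = 1"

definition invariant_distribution :: "('s::finite \<Rightarrow> 's \<Rightarrow> real) \<Rightarrow> ('s \<Rightarrow> real) \<Rightarrow> bool" where
  "invariant_distribution Pm q \<longleftrightarrow> prob_vector q \<and> (\<forall>y. (\<Sum>x\<in>UNIV. q x * Pm x y) = q y)"

definition kappa :: "('s \<Rightarrow> 's \<Rightarrow> real) \<Rightarrow> 's \<Rightarrow> 's \<Rightarrow> real" where
  "kappa Pm x y = Pm x y - (if x = y then 1 else 0)"

definition kappa_hat :: "('s \<Rightarrow> 's \<Rightarrow> real) \<Rightarrow> ('s \<Rightarrow> real) \<Rightarrow> 's \<Rightarrow> 's \<Rightarrow> real" where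
  "kappa_hat Pm q x y = q y * kappa Pm y x / q x"

definition markov_chain_on :: "'w measure \<Rightarrow> (nat \<Rightarrow> 'w \<Rightarrow> 's) \<Rightarrow> ('s \<Rightarrow> real) \<Rightarrow> ('s \<Rightarrow> 's \<Rightarrow> real) \<Rightarrow> bool" where
  "markov_chain_on M Z p0 Pm \<longleftrightarrow>
     (\<forall>n. Z n \<in> measurable M (count_space UNIV)) \<and>
     (\<forall>n (xs :: nat \<Rightarrow> 's). measure M {\<omega> \<in> space M. \<forall>i\<le>n. Z i \<omega> = xs i}
                              = p0 (xs 0) * (\<Prod>i<n. Pm (xs i) (xs (Suc i))))"

definition rate_one_poisson_process :: "'w measure \<Rightarrow> (real \<Rightarrow> 'w \<Rightarrow> nat) \<Rightarrow> bool" where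
  "rate_one_poisson_process M N \<longleftrightarrow>
     (\<forall>t\<ge>0. N t \<in> measurable M (count_space UNIV)) \<and>
     (\<forall>\<omega>\<in>space M. N 0 \<omega> = 0 \<and> mono_on {0..} (\<lambda>t. N t \<omega>) \<and>
         (\<forall>t\<ge>0. \<forall>\<^sub>F s in at_right t. N s \<omega> = N t \<omega>)) \<and>
     (\<forall>s t (k::nat). 0 \<le> s \<longrightarrow> s \<le> t \<longrightarrow>
         measure M {\<omega> \<in> space M. N t \<omega> - N s \<omega> = k} = (t - s) ^ k / fact k * exp (- (t - s))) \<and>
     (\<forall>n (ts :: nat \<Rightarrow> real). 0 \<le> ts 0 \<longrightarrow> (\<forall>i<n. ts i \<le> ts (Suc i)) \<longrightarrow>
         prob_space.indep_vars M (\<lambda>_. count_space UNIV) (\<lambda>i \<omega>. N (ts (Suc i)) \<omega> - N (ts i) \<omega>) {..<n})"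

definition uniformized_chain_setting ::
  "'w measure \<Rightarrow> (nat \<Rightarrow> 'w \<Rightarrow> 's) \<Rightarrow> (real \<Rightarrow> 'w \<Rightarrow> nat) \<Rightarrow> ('s \<Rightarrow> real) \<Rightarrow> ('s \<Rightarrow> 's \<Rightarrow> real) \<Rightarrow> bool" where
  "uniformized_chain_setting M Z N p0 Pm \<longleftrightarrow>
     prob_space M \<and> markov_chain_on M Z p0 Pm \<and> rate_one_poisson_process M N \<and>
     prob_space.indep_set M
        (sigma_sets (space M) {{\<omega> \<in> space M. Z n \<omega> = x} | n x. True})
        (sigma_sets (space M) {{\<omega> \<in> space M. N t \<omega> = k} | t k. 0 \<le> t})"

definition ctmc :: "(nat \<Rightarrow> 'w \<Rightarrow> 's) \<Rightarrow> (real \<Rightarrow> 'w \<Rightarrow> nat) \<Rightarrow> real \<Rightarrow> 'w \<Rightarrow> 's" where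
  "ctmc Z N t \<omega> = Z (N t \<omega>) \<omega>"

definition lratio :: "'w measure \<Rightarrow> (nat \<Rightarrow> 'w \<Rightarrow> 's) \<Rightarrow> (real \<Rightarrow> 'w \<Rightarrow> nat) \<Rightarrow> ('s \<Rightarrow> real) \<Rightarrow> real \<Rightarrow> 's \<Rightarrow> real" where
  "lratio P Z N q t y = measure P {\<omega> \<in> space P. ctmc Z N t \<omega> = y} / q y"

definition natural_filtration :: "'w measure \<Rightarrow> (real \<Rightarrow> 'w \<Rightarrow> 's) \<Rightarrow> real \<Rightarrow> 'w measure" where
  "natural_filtration M Y s =
     sigma (space M) {{\<omega> \<in> space M. Y u \<omega> = y} | u y. 0 \<le> u \<and> u \<le> s}"

definition martingale :: "'w measure \<Rightarrow> (real \<Rightarrow> 'w measure) \<Rightarrow> real set \<Rightarrow> (real \<Rightarrow> 'w \<Rightarrow> real) \<Rightarrow> bool" where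
  "martingale M F I Y \<longleftrightarrow>
     (\<forall>s\<in>I. subalgebra M (F s) \<and> Y s \<in> borel_measurable (F s) \<and> integrable M (Y s)) \<and>
     (\<forall>s\<in>I. \<forall>t\<in>I. s \<le> t \<longrightarrow> sets (F s) \<subseteq> sets (F t)) \<and>
     (\<forall>s\<in>I. \<forall>t\<in>I. s \<le> t \<longrightarrow> (AE \<omega> in M. real_cond_exp M (F s) (Y t) \<omega> = Y s \<omega>))"

end

theory Submission
  imports Defs
begin


fun mpow :: "('s::finite \<Rightarrow> 's \<Rightarrow> real) \<Rightarrow> nat \<Rightarrow> 's \<Rightarrow> 's \<Rightarrow> real" where
  "mpow Pm 0 x y = (if x = y then 1 else 0)"
| "mpow Pm (Suc n) x y = (\<Sum>z\<in>UNIV. mpow Pm n x z * Pm z y)"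

definition pois :: "real \<Rightarrow> nat \<Rightarrow> real" where
  "pois t k = t ^ k / fact k * exp (- t)"

definition Emat :: "('s::finite \<Rightarrow> 's \<Rightarrow> real) \<Rightarrow> real \<Rightarrow> 's \<Rightarrow> 's \<Rightarrow> real" where
  "Emat Pm t x y = (\<Sum>n. mpow Pm n x y / fact n * t ^ n)"

definition Pt :: "('s::finite \<Rightarrow> 's \<Rightarrow> real) \<Rightarrow> real \<Rightarrow> 's \<Rightarrow> 's \<Rightarrow> real" where
  "Pt Pm t x y = exp (- t) * Emat Pm t x y"

lemma sum_mult_delta: "(\<Sum>z\<in>(UNIV::'s::finite set). f z * (if z = y then 1 else 0)) = (f y :: real)"
proof -
  have "(\<Sum>z\<in>(UNIV::'s set). f z * (if z = y then 1 else 0)) = (\<Sum>z\<in>UNIV. if z = y then f z else 0)"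
    by (rule sum.cong) auto
  then show ?thesis by simp
qed

lemma sum_delta_mult: "(\<Sum>z\<in>(UNIV::'s::finite set). (if y = z then 1 else 0) * f z) = (f y :: real)"
proof -
  have "(\<Sum>z\<in>(UNIV::'s set). (if y = z then 1 else 0) * f z) = (\<Sum>z\<in>UNIV. if z = y then f z else 0)"
    by (rule sum.cong) auto
  then show ?thesis by simp
qed

lemma mpow_Suc_left: "mpow Pm (Suc n) x y = (\<Sum>z\<in>UNIV. Pm x z * mpow Pm n z y)"
proof (induction n arbitrary: y)
  case 0
  show ?case by (simp add: sum_mult_delta sum_delta_mult)
next
  case (Suc n)
  have "mpow Pm (Suc (Suc n)) x y = (\<Sum>w\<in>UNIV. (\<Sum>z\<in>UNIV. Pm x z * mpow Pm n z w) * Pm w y)"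
    using Suc by simp
  also have "\<dots> = (\<Sum>w\<in>UNIV. \<Sum>z\<in>UNIV. Pm x z * (mpow Pm n z w * Pm w y))"
    by (simp add: sum_distrib_right mult.assoc)
  also have "\<dots> = (\<Sum>z\<in>UNIV. \<Sum>w\<in>UNIV. Pm x z * (mpow Pm n z w * Pm w y))"
    by (rule sum.swap)
  finally show ?case by (simp add: sum_distrib_left)
qed

lemma mpow_nonneg:
  assumes "stochastic_matrix Pm" shows "0 \<le> mpow Pm n x y"
  using assms by (induction n arbitrary: y) (auto simp: stochastic_matrix_def intro!: sum_nonneg)

lemma mpow_rowsum:
  assumes "stochastic_matrix Pm" shows "(\<Sum>y\<in>UNIV. mpow Pm n x y) = 1"
proof (induction n)
  case 0
  then show ?case by simp
next
  case (Suc n)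
  have "(\<Sum>y\<in>UNIV. mpow Pm (Suc n) x y) = (\<Sum>y\<in>UNIV. \<Sum>z\<in>UNIV. mpow Pm n x z * Pm z y)"
    by simp
  also have "\<dots> = (\<Sum>z\<in>UNIV. \<Sum>y\<in>UNIV. mpow Pm n x z * Pm z y)"
    by (rule sum.swap)
  also have "\<dots> = (\<Sum>z\<in>UNIV. mpow Pm n x z * (\<Sum>y\<in>UNIV. Pm z y))"
    by (simp add: sum_distrib_left)
  also have "\<dots> = 1" using assms Suc by (simp add: stochastic_matrix_def)
  finally show ?case .
qed

lemma mpow_le1:
  assumes "stochastic_matrix Pm" shows "mpow Pm n x y \<le> 1"
proof -
  have "mpow Pm n x y \<le> (\<Sum>y\<in>UNIV. mpow Pm n x y)"
    by (rule member_le_sum) (auto intro: mpow_nonneg[OF assms])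
  then show ?thesis using mpow_rowsum[OF assms] by simp
qed

lemma mpow_abs_le1:
  assumes "stochastic_matrix Pm" shows "\<bar>mpow Pm n x y\<bar> \<le> 1"
  using mpow_nonneg[OF assms] mpow_le1[OF assms] by (simp add: abs_le_iff)

lemma mpow_invariant:
  assumes "invariant_distribution Pm q"
  shows "(\<Sum>x\<in>UNIV. q x * mpow Pm n x y) = q y"
proof (induction n arbitrary: y)
  case 0
  show ?case by (simp add: sum_mult_delta)
next
  case (Suc n)
  have "(\<Sum>x\<in>UNIV. q x * mpow Pm (Suc n) x y) = (\<Sum>x\<in>UNIV. \<Sum>z\<in>UNIV. q x * mpow Pm n x z * Pm z y)"
    by (simp add: sum_distrib_left mult.assoc)
  also have "\<dots> = (\<Sum>z\<in>UNIV. \<Sum>x\<in>UNIV. q x * mpow Pm n x z * Pm z y)"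
    by (rule sum.swap)
  also have "\<dots> = (\<Sum>z\<in>UNIV. (\<Sum>x\<in>UNIV. q x * mpow Pm n x z) * Pm z y)"
    by (simp add: sum_distrib_right)
  also have "\<dots> = (\<Sum>z\<in>UNIV. q z * Pm z y)" using Suc by simp
  also have "\<dots> = q y" using assms by (simp add: invariant_distribution_def)
  finally show ?case .
qed

lemma summable_bounded_exp:
  fixes c :: "nat \<Rightarrow> real"
  assumes "\<And>n. \<bar>c n\<bar> \<le> 1"
  shows "summable (\<lambda>n. c n / fact n * t ^ n)"
proof (rule summable_comparison_test[OF _ summable_exp[of "\<bar>t\<bar>"]])
  show "\<exists>N. \<forall>n\<ge>N. norm (c n / fact n * t ^ n) \<le> inverse (fact n) * \<bar>t\<bar> ^ n"
  proof (intro exI allI impI)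
    fix n :: nat
    have "norm (c n / fact n * t ^ n) = \<bar>c n\<bar> * (inverse (fact n) * \<bar>t\<bar> ^ n)"
      by (simp add: abs_mult power_abs divide_inverse)
    also have "\<dots> \<le> 1 * (inverse (fact n) * \<bar>t\<bar> ^ n)"
      by (rule mult_right_mono[OF assms]) simp
    finally show "norm (c n / fact n * t ^ n) \<le> inverse (fact n) * \<bar>t\<bar> ^ n" by simp
  qed
qed

lemma summable_Emat:
  assumes "stochastic_matrix Pm"
  shows "summable (\<lambda>n. mpow Pm n x y / fact n * t ^ n)"
  by (rule summable_bounded_exp) (rule mpow_abs_le1[OF assms])

lemma pois_sums_Pt:
  assumes "stochastic_matrix Pm"
  shows "(\<lambda>k. pois t k * mpow Pm k x y) sums Pt Pm t x y"
proof -
  have "(\<lambda>n. exp (-t) * (mpow Pm n x y / fact n * t ^ n)) sums (exp (-t) * Emat Pm t x y)"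
    unfolding Emat_def by (rule sums_mult) (rule summable_sums[OF summable_Emat[OF assms]])
  then show ?thesis unfolding Pt_def pois_def by (simp add: field_simps)
qed

lemma Emat_deriv:
  assumes "stochastic_matrix Pm"
  shows "((\<lambda>t. Emat Pm t x y) has_real_derivative (\<Sum>z\<in>UNIV. Emat Pm t x z * Pm z y)) (at t)"
    and "((\<lambda>t. Emat Pm t x y) has_real_derivative (\<Sum>z\<in>UNIV. Pm x z * Emat Pm t z y)) (at t)"
proof -
  define c where "c n = mpow Pm n x y / fact n" for n
  have sc: "\<And>u. summable (\<lambda>n. c n * u ^ n)"
    unfolding c_def by (rule summable_Emat[OF assms])
  have D: "((\<lambda>t. Emat Pm t x y) has_real_derivative (\<Sum>n. diffs c n * t ^ n)) (at t)"
    using termdiffs_strong_converges_everywhere[of c t, OF sc] unfolding Emat_def c_def by simp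
  have dc: "diffs c n = mpow Pm (Suc n) x y / fact n" for n
  proof -
    have "diffs c n = real (Suc n) * mpow Pm (Suc n) x y / (real (Suc n) * fact n)"
      unfolding diffs_def c_def by (simp del: mpow.simps of_nat_Suc add: fact_Suc)
    also have "\<dots> = mpow Pm (Suc n) x y / fact n"
      by (rule mult_divide_mult_cancel_left) simp
    finally show ?thesis .
  qed
  have sm: "\<And>z. summable (\<lambda>n. mpow Pm n x z / fact n * t ^ n)"
           "\<And>z. summable (\<lambda>n. mpow Pm n z y / fact n * t ^ n)"
    by (rule summable_Emat[OF assms])+
  have "(\<Sum>n. diffs c n * t ^ n) = (\<Sum>n. \<Sum>z\<in>UNIV. (mpow Pm n x z / fact n * t ^ n) * Pm z y)"
    unfolding dc by (simp add: sum_distrib_left sum_distrib_right sum_divide_distrib mult_ac)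
  also have "\<dots> = (\<Sum>z\<in>UNIV. \<Sum>n. (mpow Pm n x z / fact n * t ^ n) * Pm z y)"
    by (rule suminf_sum) (intro summable_mult2 sm)
  also have "\<dots> = (\<Sum>z\<in>UNIV. Emat Pm t x z * Pm z y)"
    unfolding Emat_def by (simp only: suminf_mult2[OF sm(1)])
  finally show "((\<lambda>t. Emat Pm t x y) has_real_derivative (\<Sum>z\<in>UNIV. Emat Pm t x z * Pm z y)) (at t)"
    using D by simp
  have "(\<Sum>n. diffs c n * t ^ n) = (\<Sum>n. \<Sum>z\<in>UNIV. Pm x z * (mpow Pm n z y / fact n * t ^ n))"
    unfolding dc mpow_Suc_left by (simp add: sum_distrib_left sum_distrib_right sum_divide_distrib mult_ac)
  also have "\<dots> = (\<Sum>z\<in>UNIV. \<Sum>n. Pm x z * (mpow Pm n z y / fact n * t ^ n))"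
    by (rule suminf_sum) (intro summable_mult sm)
  also have "\<dots> = (\<Sum>z\<in>UNIV. Pm x z * Emat Pm t z y)"
    unfolding Emat_def by (simp only: suminf_mult[OF sm(2)])
  finally show "((\<lambda>t. Emat Pm t x y) has_real_derivative (\<Sum>z\<in>UNIV. Pm x z * Emat Pm t z y)) (at t)"
    using D by simp
qed

lemma Pt_deriv:
  assumes "stochastic_matrix Pm"
  shows "((\<lambda>t. Pt Pm t x y) has_real_derivative (\<Sum>z\<in>UNIV. Pt Pm t x z * kappa Pm z y)) (at t)"
    and "((\<lambda>t. Pt Pm t x y) has_real_derivative (\<Sum>z\<in>UNIV. kappa Pm x z * Pt Pm t z y)) (at t)"
proof -
  have e: "((\<lambda>t. exp (- t)) has_real_derivative (- exp (- t))) (at t)"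
    by (auto intro!: derivative_eq_intros)
  have k1: "(\<Sum>z\<in>UNIV. Pt Pm t x z * kappa Pm z y) = exp (-t) * (\<Sum>z\<in>UNIV. Emat Pm t x z * Pm z y) - Pt Pm t x y"
    by (simp add: kappa_def right_diff_distrib sum_subtractf sum_mult_delta)
       (simp add: Pt_def sum_distrib_left mult_ac)
  have k2: "(\<Sum>z\<in>UNIV. kappa Pm x z * Pt Pm t z y) = exp (-t) * (\<Sum>z\<in>UNIV. Pm x z * Emat Pm t z y) - Pt Pm t x y"
    by (simp add: kappa_def left_diff_distrib sum_subtractf sum_delta_mult)
       (simp add: Pt_def sum_distrib_left mult_ac)
  show "((\<lambda>t. Pt Pm t x y) has_real_derivative (\<Sum>z\<in>UNIV. Pt Pm t x z * kappa Pm z y)) (at t)"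
    unfolding k1 using DERIV_mult[OF e Emat_deriv(1)[OF assms, of x y t]]
    by (simp add: Pt_def fun_eq_iff algebra_simps)
  show "((\<lambda>t. Pt Pm t x y) has_real_derivative (\<Sum>z\<in>UNIV. kappa Pm x z * Pt Pm t z y)) (at t)"
    unfolding k2 using DERIV_mult[OF e Emat_deriv(2)[OF assms, of x y t]]
    by (simp add: Pt_def fun_eq_iff algebra_simps)
qed

lemma Pt_zero: "Pt Pm 0 x y = (if x = y then 1 else 0)"
proof -
  have "Emat Pm 0 x y = (\<Sum>n. mpow Pm n x y / fact n * 0 ^ n)" by (simp add: Emat_def)
  also have "\<dots> = mpow Pm 0 x y / fact 0 * 0 ^ 0"
    by (subst suminf_finite[of "{0}"]) auto
  finally show ?thesis by (simp add: Pt_def)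
qed

lemma Pt_invariant:
  assumes "stochastic_matrix Pm" "invariant_distribution Pm q"
  shows "(\<Sum>x\<in>UNIV. q x * Pt Pm t x y) = q y"
proof -
  have "(\<Sum>x\<in>UNIV. q x * Emat Pm t x y) = (\<Sum>x\<in>UNIV. \<Sum>n. q x * (mpow Pm n x y / fact n * t ^ n))"
    unfolding Emat_def by (simp only: suminf_mult[OF summable_Emat[OF assms(1)]])
  also have "\<dots> = (\<Sum>n. \<Sum>x\<in>UNIV. q x * (mpow Pm n x y / fact n * t ^ n))"
    by (rule suminf_sum[symmetric]) (intro summable_mult summable_Emat[OF assms(1)])
  also have "\<dots> = (\<Sum>n. q y / fact n * t ^ n)"
    by (simp add: sum_distrib_right[symmetric] mult.assoc[symmetric] sum_divide_distrib[symmetric]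
        mpow_invariant[OF assms(2)] del: sum_distrib_right)
  also have "\<dots> = q y * exp t"
  proof -
    have "(\<lambda>n. q y * (inverse (fact n) * t ^ n)) sums (q y * exp t)"
      by (rule sums_mult) (simp add: exp_def summable_exp[of t, THEN summable_sums, unfolded scaleR_conv_of_real] 
          flip: scaleR_conv_of_real)
    then show ?thesis by (simp add: sums_iff divide_inverse mult_ac)
  qed
  finally have E: "(\<Sum>x\<in>UNIV. q x * Emat Pm t x y) = q y * exp t" .
  have "(\<Sum>x\<in>UNIV. q x * Pt Pm t x y) = exp (- t) * (\<Sum>x\<in>UNIV. q x * Emat Pm t x y)"
    by (simp add: Pt_def sum_distrib_left mult_ac)
  also have "\<dots> = q y" unfolding E by (simp add: exp_minus field_simps)
  finally show ?thesis .
qed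

lemma Pt_nonneg:
  assumes "stochastic_matrix Pm" "0 \<le> t" shows "0 \<le> Pt Pm t x y"
  unfolding Pt_def Emat_def
  by (intro mult_nonneg_nonneg suminf_nonneg summable_Emat[OF assms(1)])
     (auto intro!: mult_nonneg_nonneg divide_nonneg_nonneg mpow_nonneg[OF assms(1)] simp: assms(2))


lemma sigma_sets_Inter_space:
  assumes G: "G \<subseteq> Pow \<Omega>" and R: "finite R"
    and A: "\<And>r. r \<in> R \<Longrightarrow> A r \<in> sigma_sets \<Omega> G"
  shows "\<Omega> \<inter> (\<Inter>r\<in>R. A r) \<in> sigma_sets \<Omega> G"
  using R A
proof (induction R)
  case empty
  then show ?case by (simp add: sigma_sets_top)
next
  case (insert r R)
  interpret S: sigma_algebra \<Omega> "sigma_sets \<Omega> G" using G by (rule sigma_algebra_sigma_sets)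
  have "\<Omega> \<inter> (\<Inter>r\<in>insert r R. A r) = A r \<inter> (\<Omega> \<inter> (\<Inter>r\<in>R. A r))" by auto
  then show ?case using insert by (metis S.Int insertCI)
qed

locale unif =
  fixes M :: "'w measure" and Z :: "nat \<Rightarrow> 'w \<Rightarrow> 's::finite" and N :: "real \<Rightarrow> 'w \<Rightarrow> nat"
    and p0 :: "'s \<Rightarrow> real" and Pm :: "'s \<Rightarrow> 's \<Rightarrow> real"
  assumes setting: "uniformized_chain_setting M Z N p0 Pm"
      and stoch: "stochastic_matrix Pm"
begin

sublocale prob_space M using setting by (simp add: uniformized_chain_setting_def)

lemma mc: "markov_chain_on M Z p0 Pm" using setting by (simp add: uniformized_chain_setting_def)
lemma pp: "rate_one_poisson_process M N" using setting by (simp add: uniformized_chain_setting_def)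

definition "ZGen = {{\<omega> \<in> space M. Z n \<omega> = x} | n x. True}"
definition "NGen = {{\<omega> \<in> space M. N t \<omega> = k} | t k. 0 \<le> t}"

lemma indepZN: "indep_set (sigma_sets (space M) ZGen) (sigma_sets (space M) NGen)"
  using setting by (simp add: uniformized_chain_setting_def ZGen_def NGen_def)

lemma Z_meas[measurable]: "Z n \<in> measurable M (count_space UNIV)"
  using mc by (simp add: markov_chain_on_def)

lemma N_meas: "0 \<le> t \<Longrightarrow> N t \<in> measurable M (count_space UNIV)"
  using pp by (simp add: rate_one_poisson_process_def)

lemma X_meas: "0 \<le> t \<Longrightarrow> ctmc Z N t \<in> measurable M (count_space UNIV)"
  unfolding ctmc_def
  by (rule measurable_compose_countable[where f="\<lambda>n \<omega>. Z n \<omega>" and g="N t"]) (auto intro: N_meas)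

lemma N_0: "\<omega> \<in> space M \<Longrightarrow> N 0 \<omega> = 0"
  using pp by (simp add: rate_one_poisson_process_def)

lemma N_mono: "\<omega> \<in> space M \<Longrightarrow> 0 \<le> s \<Longrightarrow> s \<le> t \<Longrightarrow> N s \<omega> \<le> N t \<omega>"
  using pp unfolding rate_one_poisson_process_def mono_on_def by auto

lemma N_rc: "\<omega> \<in> space M \<Longrightarrow> 0 \<le> t \<Longrightarrow> \<forall>\<^sub>F s in at_right t. N s \<omega> = N t \<omega>"
  using pp by (simp add: rate_one_poisson_process_def)

lemma N_pois: "0 \<le> s \<Longrightarrow> s \<le> t \<Longrightarrow> prob {\<omega> \<in> space M. N t \<omega> - N s \<omega> = k} = pois (t - s) k"
  using pp by (simp add: rate_one_poisson_process_def pois_def)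

lemma N_indep: "0 \<le> ts 0 \<Longrightarrow> (\<forall>i<n. ts i \<le> ts (Suc i)) \<Longrightarrow>
   indep_vars (\<lambda>_. count_space UNIV) (\<lambda>i \<omega>. N (ts (Suc i)) \<omega> - N (ts i) \<omega>) {..<n}"
  using pp by (simp add: rate_one_poisson_process_def)

lemma Z_set_meas: "{\<omega> \<in> space M. Z n \<omega> = x} \<in> sets M"
  by measurable

lemma N_set_meas: "0 \<le> t \<Longrightarrow> {\<omega> \<in> space M. N t \<omega> = k} \<in> sets M"
  using measurable_sets[OF N_meas, of t "{k}"] by (simp add: vimage_def Int_def conj_commute)

lemma X_set_meas: "0 \<le> t \<Longrightarrow> {\<omega> \<in> space M. ctmc Z N t \<omega> = k} \<in> sets M"
  using measurable_sets[OF X_meas, of t "{k}"] by (simp add: vimage_def Int_def conj_commute)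

lemma ZGen_sub: "ZGen \<subseteq> Pow (space M)" by (auto simp: ZGen_def)
lemma NGen_sub: "NGen \<subseteq> Pow (space M)" by (auto simp: NGen_def)

lemma ZGen_Inter:
  assumes "finite R"
  shows "{\<omega> \<in> space M. \<forall>r\<in>R. Z (g r) \<omega> = f r} \<in> sigma_sets (space M) ZGen"
proof -
  have "{\<omega> \<in> space M. \<forall>r\<in>R. Z (g r) \<omega> = f r} = space M \<inter> (\<Inter>r\<in>R. {\<omega> \<in> space M. Z (g r) \<omega> = f r})"
    by auto
  also have "\<dots> \<in> sigma_sets (space M) ZGen"
    by (rule sigma_sets_Inter_space[OF ZGen_sub assms]) (auto simp: ZGen_def)
  finally show ?thesis .
qed

lemma NGen_Inter:
  assumes "finite R" "\<And>r. r \<in> R \<Longrightarrow> 0 \<le> g r"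
  shows "{\<omega> \<in> space M. \<forall>r\<in>R. N (g r) \<omega> = f r} \<in> sigma_sets (space M) NGen"
proof -
  have "{\<omega> \<in> space M. \<forall>r\<in>R. N (g r) \<omega> = f r} = space M \<inter> (\<Inter>r\<in>R. {\<omega> \<in> space M. N (g r) \<omega> = f r})"
    by auto
  also have "\<dots> \<in> sigma_sets (space M) NGen"
    by (rule sigma_sets_Inter_space[OF NGen_sub assms(1)], rule sigma_sets.Basic) (auto simp: NGen_def assms(2))
  finally show ?thesis .
qed

lemma Z_cyl: "prob {\<omega> \<in> space M. \<forall>i\<le>n. Z i \<omega> = xs i} = p0 (xs 0) * (\<Prod>i<n. Pm (xs i) (xs (Suc i)))"
  using mc by (simp add: markov_chain_on_def)

lemma Z_onestep:
  assumes Sm: "S m \<subseteq> {z}"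
  shows "prob {\<omega> \<in> space M. (\<forall>k\<le>m. Z k \<omega> \<in> S k) \<and> Z (Suc m) \<omega> = y}
       = prob {\<omega> \<in> space M. \<forall>k\<le>m. Z k \<omega> \<in> S k} * Pm z y"
proof -
  define I where "I = PiE {..m} S"
  define C where "C xs = {\<omega> \<in> space M. \<forall>k\<le>m. Z k \<omega> = xs k}" for xs
  have fI: "finite I" unfolding I_def by (intro finite_PiE) auto
  have disj: "disjoint_family_on C I"
    unfolding disjoint_family_on_def C_def I_def
  proof (intro ballI impI)
    fix a b assume "a \<in> PiE {..m} S" "b \<in> PiE {..m} S" "a \<noteq> b"
    then obtain k where "k \<le> m" "a k \<noteq> b k" by (metis PiE_ext atMost_iff)
    then show "{\<omega> \<in> space M. \<forall>k\<le>m. Z k \<omega> = a k} \<inter> {\<omega> \<in> space M. \<forall>k\<le>m. Z k \<omega> = b k} = {}"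
      by auto
  qed
  have Cm: "C xs \<in> sets M" for xs
  proof -
    have "C xs = {\<omega> \<in> space M. \<forall>k\<in>{..m}. Z k \<omega> = xs k}" by (auto simp: C_def)
    also have "\<dots> \<in> sets M" by measurable
    finally show ?thesis .
  qed
  have U1: "{\<omega> \<in> space M. \<forall>k\<le>m. Z k \<omega> \<in> S k} = (\<Union>xs\<in>I. C xs)"
  proof (intro equalityI subsetI)
    fix \<omega> assume "\<omega> \<in> {\<omega> \<in> space M. \<forall>k\<le>m. Z k \<omega> \<in> S k}"
    then have "restrict (\<lambda>k. Z k \<omega>) {..m} \<in> I" "\<omega> \<in> C (restrict (\<lambda>k. Z k \<omega>) {..m})"
      by (auto simp: I_def C_def)
    then show "\<omega> \<in> (\<Union>xs\<in>I. C xs)" by blast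
  qed (auto simp: I_def C_def PiE_def Pi_def)
  have U2: "{\<omega> \<in> space M. (\<forall>k\<le>m. Z k \<omega> \<in> S k) \<and> Z (Suc m) \<omega> = y}
        = (\<Union>xs\<in>I. C xs \<inter> {\<omega> \<in> space M. Z (Suc m) \<omega> = y})"
    using U1 by blast
  have each: "prob (C xs \<inter> {\<omega> \<in> space M. Z (Suc m) \<omega> = y}) = prob (C xs) * Pm z y" if xs: "xs \<in> I" for xs
  proof -
    have xm: "xs m = z" using xs Sm by (auto simp: I_def)
    define ys where "ys = xs(Suc m := y)"
    have "C xs \<inter> {\<omega> \<in> space M. Z (Suc m) \<omega> = y} = {\<omega> \<in> space M. \<forall>i\<le>Suc m. Z i \<omega> = ys i}"
      by (auto simp: C_def ys_def le_Suc_eq)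
    then have "prob (C xs \<inter> {\<omega> \<in> space M. Z (Suc m) \<omega> = y}) = p0 (ys 0) * (\<Prod>i<Suc m. Pm (ys i) (ys (Suc i)))"
      using Z_cyl by simp
    also have "\<dots> = p0 (xs 0) * (\<Prod>i<m. Pm (xs i) (xs (Suc i))) * Pm z y"
      by (simp add: ys_def xm)
    also have "p0 (xs 0) * (\<Prod>i<m. Pm (xs i) (xs (Suc i))) = prob (C xs)"
      using Z_cyl by (simp add: C_def)
    finally show ?thesis .
  qed
  have "prob {\<omega> \<in> space M. (\<forall>k\<le>m. Z k \<omega> \<in> S k) \<and> Z (Suc m) \<omega> = y}
      = (\<Sum>xs\<in>I. prob (C xs \<inter> {\<omega> \<in> space M. Z (Suc m) \<omega> = y}))"
    unfolding U2 using disj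
    by (intro finite_measure_finite_Union fI) (auto simp: disjoint_family_on_def intro!: sets.Int Cm Z_set_meas)
  also have "\<dots> = (\<Sum>xs\<in>I. prob (C xs)) * Pm z y"
    by (simp add: each sum_distrib_right)
  also have "(\<Sum>xs\<in>I. prob (C xs)) = prob {\<omega> \<in> space M. \<forall>k\<le>m. Z k \<omega> \<in> S k}"
    unfolding U1 using disj by (intro finite_measure_finite_Union[symmetric] fI) (auto intro: Cm)
  finally show ?thesis .
qed

lemma Z_multistep:
  assumes Sn: "S n \<subseteq> {x}"
  shows "prob {\<omega> \<in> space M. (\<forall>k\<le>n. Z k \<omega> \<in> S k) \<and> Z (n + j) \<omega> = y}
       = prob {\<omega> \<in> space M. \<forall>k\<le>n. Z k \<omega> \<in> S k} * mpow Pm j x y"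
proof (induction j arbitrary: y)
  case 0
  show ?case
  proof (cases "y = x")
    case True
    then have "{\<omega> \<in> space M. (\<forall>k\<le>n. Z k \<omega> \<in> S k) \<and> Z (n + 0) \<omega> = y} = {\<omega> \<in> space M. \<forall>k\<le>n. Z k \<omega> \<in> S k}"
      using Sn by auto
    then show ?thesis using True by (simp only:) simp
  next
    case False
    then have "{\<omega> \<in> space M. (\<forall>k\<le>n. Z k \<omega> \<in> S k) \<and> Z (n + 0) \<omega> = y} = {}"
      using Sn by auto
    then show ?thesis using False by (simp only:) simp
  qed
next
  case (Suc j)
  define E where "E = {\<omega> \<in> space M. \<forall>k\<le>n. Z k \<omega> \<in> S k}"
  define F where "F z = {\<omega> \<in> space M. (\<forall>k\<le>n. Z k \<omega> \<in> S k) \<and> Z (n + j) \<omega> = z \<and> Z (Suc (n + j)) \<omega> = y}" for z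
  have Fm: "F z \<in> sets M" for z
  proof -
    have "F z = {\<omega> \<in> space M. (\<forall>k\<in>{..n}. Z k \<omega> \<in> S k) \<and> Z (n + j) \<omega> = z \<and> Z (Suc (n + j)) \<omega> = y}"
      by (auto simp: F_def)
    also have "\<dots> \<in> sets M" by measurable
    finally show ?thesis .
  qed
  have U: "{\<omega> \<in> space M. (\<forall>k\<le>n. Z k \<omega> \<in> S k) \<and> Z (n + Suc j) \<omega> = y} = (\<Union>z\<in>UNIV. F z)"
    by (auto simp: F_def)
  have each: "prob (F z) = prob E * mpow Pm j x z * Pm z y" for z
  proof -
    define S' where "S' k = (if k \<le> n then S k else UNIV) \<inter> (if k = n + j then {z} else UNIV)" for k
    have "F z = {\<omega> \<in> space M. (\<forall>k\<le>n + j. Z k \<omega> \<in> S' k) \<and> Z (Suc (n + j)) \<omega> = y}"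
      by (auto simp: F_def S'_def)
    also have "prob \<dots> = prob {\<omega> \<in> space M. \<forall>k\<le>n + j. Z k \<omega> \<in> S' k} * Pm z y"
      by (rule Z_onestep) (auto simp: S'_def)
    also have "{\<omega> \<in> space M. \<forall>k\<le>n + j. Z k \<omega> \<in> S' k} = {\<omega> \<in> space M. (\<forall>k\<le>n. Z k \<omega> \<in> S k) \<and> Z (n + j) \<omega> = z}"
      by (auto simp: S'_def)
    also have "prob \<dots> = prob E * mpow Pm j x z"
      using Suc.IH unfolding E_def .
    finally show ?thesis .
  qed
  have "prob {\<omega> \<in> space M. (\<forall>k\<le>n. Z k \<omega> \<in> S k) \<and> Z (n + Suc j) \<omega> = y} = (\<Sum>z\<in>UNIV. prob (F z))"
    unfolding U by (intro finite_measure_finite_Union) (auto simp: disjoint_family_on_def F_def intro: Fm)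
  also have "\<dots> = prob E * mpow Pm (Suc j) x y"
    by (simp add: each sum_distrib_left mult_ac)
  finally show ?case unfolding E_def .
qed

end


context unif begin

lemma N_grid:
  fixes \<tau> :: "nat \<Rightarrow> real" and c :: "nat \<Rightarrow> nat"
  assumes t0: "\<tau> 0 = 0" and tm: "\<forall>i<m. \<tau> i \<le> \<tau> (Suc i)"
    and c0: "c 0 = 0" and cm: "\<forall>i<m. c i \<le> c (Suc i)"
  shows "prob {\<omega> \<in> space M. \<forall>i\<le>m. N (\<tau> i) \<omega> = c i}
       = (\<Prod>i<m. pois (\<tau> (Suc i) - \<tau> i) (c (Suc i) - c i))"
proof -
  have tpos: "i \<le> m \<Longrightarrow> 0 \<le> \<tau> i" for i
  proof (induction i)
    case 0 then show ?case using t0 by simp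
  next
    case (Suc i) then show ?case using tm by (metis Suc_le_lessD less_imp_le_nat order_trans)
  qed
  define D where "D i = (\<lambda>\<omega>. N (\<tau> (Suc i)) \<omega> - N (\<tau> i) \<omega>)" for i
  define A where "A i = D i -` {c (Suc i) - c i} \<inter> space M" for i
  have ev: "{\<omega> \<in> space M. \<forall>i\<le>m. N (\<tau> i) \<omega> = c i} = {\<omega> \<in> space M. \<forall>i<m. \<omega> \<in> A i}"
  proof (intro equalityI subsetI)
    fix \<omega> assume "\<omega> \<in> {\<omega> \<in> space M. \<forall>i\<le>m. N (\<tau> i) \<omega> = c i}"
    then show "\<omega> \<in> {\<omega> \<in> space M. \<forall>i<m. \<omega> \<in> A i}" by (auto simp: A_def D_def)
  next
    fix \<omega> assume w: "\<omega> \<in> {\<omega> \<in> space M. \<forall>i<m. \<omega> \<in> A i}"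
    have "i \<le> m \<Longrightarrow> N (\<tau> i) \<omega> = c i" for i
    proof (induction i)
      case 0 then show ?case using w t0 c0 N_0 by simp
    next
      case (Suc i)
      then have i: "i < m" by simp
      have "N (\<tau> i) \<omega> \<le> N (\<tau> (Suc i)) \<omega>" using w tpos[of i] i tm by (intro N_mono) auto
      moreover have "N (\<tau> (Suc i)) \<omega> - N (\<tau> i) \<omega> = c (Suc i) - c i" using w i by (auto simp: A_def D_def)
      moreover have "N (\<tau> i) \<omega> = c i" using Suc i by simp
      moreover have "c i \<le> c (Suc i)" using cm i by simp
      ultimately show ?case by arith
    qed
    then show "\<omega> \<in> {\<omega> \<in> space M. \<forall>i\<le>m. N (\<tau> i) \<omega> = c i}" using w by auto
  qed
  show ?thesis
  proof (cases "m = 0")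
    case True
    then have "{\<omega> \<in> space M. \<forall>i\<le>m. N (\<tau> i) \<omega> = c i} = space M" using N_0 t0 c0 by auto
    then show ?thesis using True by (simp add: prob_space)
  next
    case False
    have ind: "indep_vars (\<lambda>_. count_space UNIV) D {..<m}"
      unfolding D_def by (rule N_indep) (use t0 tm in auto)
    then have ind': "indep_sets (\<lambda>i. {D i -` B \<inter> space M | B. B \<in> sets (count_space UNIV)}) {..<m}"
      unfolding indep_vars_def by (auto elim!: indep_sets_mono_sets intro: sigma_sets.Basic)
    have "{\<omega> \<in> space M. \<forall>i<m. \<omega> \<in> A i} = (\<Inter>i\<in>{..<m}. A i)"
      using False by (auto simp: A_def)
    then have "prob {\<omega> \<in> space M. \<forall>i\<le>m. N (\<tau> i) \<omega> = c i} = prob (\<Inter>i\<in>{..<m}. A i)"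
      using ev by simp
    also have "\<dots> = (\<Prod>i\<in>{..<m}. prob (A i))"
      by (rule indep_setsD[OF ind']) (use False in \<open>auto simp: A_def\<close>)
    also have "\<dots> = (\<Prod>i<m. pois (\<tau> (Suc i) - \<tau> i) (c (Suc i) - c i))"
    proof (rule prod.cong[OF refl])
      fix i assume "i \<in> {..<m}"
      then have "0 \<le> \<tau> i" "\<tau> i \<le> \<tau> (Suc i)" using tpos tm by auto
      moreover have "A i = {\<omega> \<in> space M. N (\<tau> (Suc i)) \<omega> - N (\<tau> i) \<omega> = c (Suc i) - c i}"
        by (auto simp: A_def D_def)
      ultimately show "prob (A i) = pois (\<tau> (Suc i) - \<tau> i) (c (Suc i) - c i)"
        using N_pois by simp
    qed
    finally show ?thesis .
  qed
qed

lemma N_markov: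
  assumes R: "finite R" "R \<subseteq> {0..}" and s: "s \<in> R" "\<forall>r\<in>R. r \<le> s" and st: "s \<le> t"
    and w0: "\<omega>0 \<in> space M" and ns: "\<forall>r\<in>R. ns r = N r \<omega>0"
  shows "prob ({\<omega> \<in> space M. \<forall>r\<in>R. N r \<omega> = ns r} \<inter> {\<omega> \<in> space M. N t \<omega> = ns s + j})
       = prob {\<omega> \<in> space M. \<forall>r\<in>R. N r \<omega> = ns r} * pois (t - s) j"
proof -
  define l where "l = sorted_list_of_set R"
  define L where "L = length l"
  have setl: "set l = R" and sl: "sorted l" and dl: "distinct l"
    using R by (auto simp: l_def)
  have L0: "0 < L" using s setl by (auto simp: L_def intro!: length_pos_if_in_set)
  have lR: "i < L \<Longrightarrow> l ! i \<in> R" for i using setl by (auto simp: L_def)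
  have lpos: "i < L \<Longrightarrow> 0 \<le> l ! i" for i using lR R by auto
  have llast: "l ! (L - 1) = s"
  proof -
    obtain k where k: "k < L" "l ! k = s" using s setl by (metis L_def in_set_conv_nth)
    have "l ! k \<le> l ! (L - 1)" using k sl by (intro sorted_nth_mono) (auto simp: L_def)
    moreover have "l ! (L - 1) \<le> s" using s lR L0 by auto
    ultimately show ?thesis using k by simp
  qed
  define \<tau> where "\<tau> i = (if i = 0 then 0 else if i \<le> L then l ! (i - 1) else t)" for i
  define c where "c i = (if i = 0 then 0 else if i \<le> L then ns (l ! (i - 1)) else ns s + j)" for i
  have cN: "i \<le> L \<Longrightarrow> c i = N (\<tau> i) \<omega>0" for i
    using ns lR N_0[OF w0] by (auto simp: c_def \<tau>_def)
  have tm: "\<forall>i<Suc L. \<tau> i \<le> \<tau> (Suc i)"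
  proof (intro allI impI)
    fix i assume i: "i < Suc L"
    show "\<tau> i \<le> \<tau> (Suc i)"
    proof (cases "i = 0")
      case True then show ?thesis using lpos L0 by (auto simp: \<tau>_def)
    next
      case False
      show ?thesis
      proof (cases "i < L")
        case True then show ?thesis using False sl by (auto simp: \<tau>_def L_def intro!: sorted_nth_mono)
      next
        case False': False
        then have "i = L" using i by simp
        then show ?thesis using llast st False by (auto simp: \<tau>_def)
      qed
    qed
  qed
  have tpos: "i \<le> L \<Longrightarrow> 0 \<le> \<tau> i" for i using lpos by (auto simp: \<tau>_def)
  have cm: "\<forall>i<Suc L. c i \<le> c (Suc i)"
  proof (intro allI impI)
    fix i assume i: "i < Suc L"
    show "c i \<le> c (Suc i)"
    proof (cases "i < L")
      case True
      then show ?thesis using cN[of i] cN[of "Suc i"] tm tpos w0 by (auto intro!: N_mono)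
    next
      case False
      then have "i = L" using i by simp
      then show ?thesis using llast L0 by (auto simp: c_def)
    qed
  qed
  have t0: "\<tau> 0 = 0" and c0: "c 0 = 0" by (simp_all add: \<tau>_def c_def)
  have tmL: "\<forall>i<L. \<tau> i \<le> \<tau> (Suc i)" and cmL: "\<forall>i<L. c i \<le> c (Suc i)" using tm cm by simp_all
  have E1: "{\<omega> \<in> space M. \<forall>r\<in>R. N r \<omega> = ns r} = {\<omega> \<in> space M. \<forall>i\<le>L. N (\<tau> i) \<omega> = c i}"
  proof (intro equalityI subsetI)
    fix \<omega> assume "\<omega> \<in> {\<omega> \<in> space M. \<forall>r\<in>R. N r \<omega> = ns r}"
    then have w: "\<omega> \<in> space M" "\<forall>r\<in>R. N r \<omega> = ns r" by auto
    have "\<forall>i\<le>L. N (\<tau> i) \<omega> = c i"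
      using w lR N_0[OF w(1)] by (auto simp: \<tau>_def c_def)
    then show "\<omega> \<in> {\<omega> \<in> space M. \<forall>i\<le>L. N (\<tau> i) \<omega> = c i}" using w by auto
  next
    fix \<omega> assume "\<omega> \<in> {\<omega> \<in> space M. \<forall>i\<le>L. N (\<tau> i) \<omega> = c i}"
    then have w: "\<omega> \<in> space M" "\<forall>i\<le>L. N (\<tau> i) \<omega> = c i" by auto
    have "N r \<omega> = ns r" if r: "r \<in> R" for r
    proof -
      obtain k where k: "k < L" "l ! k = r" using setl r by (metis L_def in_set_conv_nth)
      then show "N r \<omega> = ns r" using w(2)[rule_format, of "Suc k"] by (auto simp: \<tau>_def c_def)
    qed
    then show "\<omega> \<in> {\<omega> \<in> space M. \<forall>r\<in>R. N r \<omega> = ns r}" using w by auto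
  qed
  have E2: "{\<omega> \<in> space M. \<forall>r\<in>R. N r \<omega> = ns r} \<inter> {\<omega> \<in> space M. N t \<omega> = ns s + j}
          = {\<omega> \<in> space M. \<forall>i\<le>Suc L. N (\<tau> i) \<omega> = c i}"
    unfolding E1 by (auto simp: le_Suc_eq \<tau>_def c_def)
  have "prob {\<omega> \<in> space M. \<forall>i\<le>Suc L. N (\<tau> i) \<omega> = c i}
      = (\<Prod>i<Suc L. pois (\<tau> (Suc i) - \<tau> i) (c (Suc i) - c i))"
    by (rule N_grid[OF t0 tm c0 cm])
  also have "\<dots> = (\<Prod>i<L. pois (\<tau> (Suc i) - \<tau> i) (c (Suc i) - c i)) * pois (t - s) j"
    using llast L0 by (simp add: \<tau>_def c_def)
  also have "(\<Prod>i<L. pois (\<tau> (Suc i) - \<tau> i) (c (Suc i) - c i)) = prob {\<omega> \<in> space M. \<forall>i\<le>L. N (\<tau> i) \<omega> = c i}"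
    by (rule N_grid[symmetric, OF t0 tmL c0 cmL])
  finally have F: "prob {\<omega> \<in> space M. \<forall>i\<le>Suc L. N (\<tau> i) \<omega> = c i} = prob {\<omega> \<in> space M. \<forall>i\<le>L. N (\<tau> i) \<omega> = c i} * pois (t - s) j" .
  show ?thesis by (subst E2, subst E1, rule F)
qed

end


lemma sigma_sets_Int2:
  assumes "G \<subseteq> Pow \<Omega>" "a \<in> sigma_sets \<Omega> G" "b \<in> sigma_sets \<Omega> G"
  shows "a \<inter> b \<in> sigma_sets \<Omega> G"
proof -
  interpret S: sigma_algebra \<Omega> "sigma_sets \<Omega> G" using assms(1) by (rule sigma_algebra_sigma_sets)
  show ?thesis using assms(2,3) by (rule S.Int)
qed

context unif begin

definition cyl :: "real set \<Rightarrow> (real \<Rightarrow> 's) \<Rightarrow> 'w set" where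
  "cyl R f = {\<omega> \<in> space M. \<forall>r\<in>R. ctmc Z N r \<omega> = f r}"

lemma cyl_meas: "finite R \<Longrightarrow> R \<subseteq> {0..} \<Longrightarrow> cyl R f \<in> sets M"
  unfolding cyl_def by (intro sets.sets_Collect_finite_All X_set_meas) auto

lemma Xset_meas': "0 \<le> t \<Longrightarrow> {\<omega> \<in> space M. ctmc Z N t \<omega> = y} \<in> sets M"
  by (rule X_set_meas)

lemma fwd_piece:
  fixes ns :: "real \<Rightarrow> nat" and f :: "real \<Rightarrow> 's"
  assumes R: "finite R" "R \<subseteq> {0..}" and s: "s \<in> R" "\<forall>r\<in>R. r \<le> s" and st: "s \<le> t"
  defines "D \<equiv> {\<omega> \<in> space M. \<forall>r\<in>R. N r \<omega> = ns r} \<inter> {\<omega> \<in> space M. \<forall>r\<in>R. Z (ns r) \<omega> = f r}"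
  shows "prob (D \<inter> {\<omega> \<in> space M. ctmc Z N t \<omega> = y}) = prob D * Pt Pm (t - s) (f s) y"
proof -
  define EN where "EN = {\<omega> \<in> space M. \<forall>r\<in>R. N r \<omega> = ns r}"
  define EZ where "EZ = {\<omega> \<in> space M. \<forall>r\<in>R. Z (ns r) \<omega> = f r}"
  have D_eq: "D = EN \<inter> EZ" by (simp add: D_def EN_def EZ_def)
  have t0: "0 \<le> t" using s R st by auto
  have s0: "0 \<le> s" using s R by auto
  have ENm: "EN \<in> sets M" unfolding EN_def
    by (intro sets.sets_Collect_finite_All N_set_meas) (use R in auto)
  have EZm: "EZ \<in> sets M" unfolding EZ_def
    by (intro sets.sets_Collect_finite_All Z_set_meas) (use R in auto)
  show ?thesis
  proof (cases "EN = {}")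
    case True
    then show ?thesis by (simp add: D_eq)
  next
    case False
    then obtain \<omega>0 where w0: "\<omega>0 \<in> EN" by auto
    then have w0s: "\<omega>0 \<in> space M" and nsN: "\<forall>r\<in>R. ns r = N r \<omega>0" by (auto simp: EN_def)
    define n where "n = ns s"
    have nsle: "\<forall>r\<in>R. ns r \<le> n"
      using nsN s w0s R unfolding n_def by (auto intro!: N_mono)
    define G where "G j = (EN \<inter> {\<omega> \<in> space M. N t \<omega> = n + j}) \<inter> (EZ \<inter> {\<omega> \<in> space M. Z (n + j) \<omega> = y})" for j
    have Gm: "G j \<in> sets M" for j
      unfolding G_def by (intro sets.Int ENm EZm N_set_meas Z_set_meas t0)
    have U: "D \<inter> {\<omega> \<in> space M. ctmc Z N t \<omega> = y} = (\<Union>j. G j)"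
    proof (intro equalityI subsetI)
      fix \<omega> assume w: "\<omega> \<in> D \<inter> {\<omega> \<in> space M. ctmc Z N t \<omega> = y}"
      then have ws: "\<omega> \<in> space M" and Ns: "N s \<omega> = n" using s by (auto simp: D_def n_def)
      have "N s \<omega> \<le> N t \<omega>" using ws s0 st by (rule N_mono)
      then have "N t \<omega> = n + (N t \<omega> - n)" using Ns by simp
      then have "\<omega> \<in> G (N t \<omega> - n)" using w by (auto simp: G_def D_eq ctmc_def)
      then show "\<omega> \<in> (\<Union>j. G j)" by blast
    next
      fix \<omega> assume "\<omega> \<in> (\<Union>j. G j)"
      then obtain j where "\<omega> \<in> G j" by blast
      then show "\<omega> \<in> D \<inter> {\<omega> \<in> space M. ctmc Z N t \<omega> = y}"
        by (auto simp: G_def D_eq ctmc_def)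
    qed
    have disj: "disjoint_family G" unfolding disjoint_family_on_def G_def by auto
    have indep_ev: "prob (a \<inter> b) = prob a * prob b"
      if "a \<in> sigma_sets (space M) NGen" "b \<in> sigma_sets (space M) ZGen" for a b
      using indep_setD[OF indepZN that(2) that(1)] by (simp add: Int_commute mult.commute)
    have ENs: "EN \<in> sigma_sets (space M) NGen"
      unfolding EN_def using NGen_Inter[OF R(1), of "\<lambda>r. r" ns] R by auto
    have EZs: "EZ \<in> sigma_sets (space M) ZGen"
      unfolding EZ_def by (rule ZGen_Inter[OF R(1)])
    have ENt: "EN \<inter> {\<omega> \<in> space M. N t \<omega> = n + j} \<in> sigma_sets (space M) NGen" for j
      by (intro sigma_sets_Int2[OF NGen_sub] ENs sigma_sets.Basic) (auto simp: NGen_def t0)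
    have EZt: "EZ \<inter> {\<omega> \<in> space M. Z (n + j) \<omega> = y} \<in> sigma_sets (space M) ZGen" for j
      by (intro sigma_sets_Int2[OF ZGen_sub] EZs sigma_sets.Basic) (auto simp: ZGen_def)
    have PD: "prob D = prob EN * prob EZ" unfolding D_eq by (rule indep_ev[OF ENs EZs])
    have PN: "prob (EN \<inter> {\<omega> \<in> space M. N t \<omega> = n + j}) = prob EN * pois (t - s) j" for j
      unfolding EN_def n_def by (rule N_markov[OF R s st w0s nsN])
    define S where "S k = {x. \<forall>r\<in>R. ns r = k \<longrightarrow> f r = x}" for k
    have EZ_S: "EZ = {\<omega> \<in> space M. \<forall>k\<le>n. Z k \<omega> \<in> S k}"
      using nsle by (auto simp: EZ_def S_def)
    have Sn: "S n \<subseteq> {f s}" using s by (auto simp: S_def n_def)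
    have PZ: "prob (EZ \<inter> {\<omega> \<in> space M. Z (n + j) \<omega> = y}) = prob EZ * mpow Pm j (f s) y" for j
    proof -
      have "EZ \<inter> {\<omega> \<in> space M. Z (n + j) \<omega> = y} = {\<omega> \<in> space M. (\<forall>k\<le>n. Z k \<omega> \<in> S k) \<and> Z (n + j) \<omega> = y}"
        unfolding EZ_S by auto
      then show ?thesis using Z_multistep[where S=S and n=n and x="f s", OF Sn, of j y] EZ_S by simp
    qed
    have PG: "prob (G j) = prob D * (pois (t - s) j * mpow Pm j (f s) y)" for j
      unfolding G_def by (simp add: indep_ev[OF ENt EZt] PN PZ PD mult_ac)
    have "(\<lambda>j. prob (G j)) sums prob (\<Union>j. G j)"
      by (rule finite_measure_UNION) (use Gm disj in auto)
    moreover have "(\<lambda>j. prob (G j)) sums (prob D * Pt Pm (t - s) (f s) y)"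
      unfolding PG by (rule sums_mult[OF pois_sums_Pt[OF stoch]])
    ultimately show ?thesis unfolding U using sums_unique2 by blast
  qed
qed

lemma fwd:
  assumes R: "finite R" "R \<subseteq> {0..}" and s: "s \<in> R" "\<forall>r\<in>R. r \<le> s" and st: "s \<le> t"
  shows "prob (cyl R f \<inter> {\<omega> \<in> space M. ctmc Z N t \<omega> = y}) = prob (cyl R f) * Pt Pm (t - s) (f s) y"
proof -
  define I where "I = PiE R (\<lambda>_. UNIV :: nat set)"
  define D where "D ns = {\<omega> \<in> space M. \<forall>r\<in>R. N r \<omega> = ns r} \<inter> {\<omega> \<in> space M. \<forall>r\<in>R. Z (ns r) \<omega> = f r}" for ns
  define Xt where "Xt = {\<omega> \<in> space M. ctmc Z N t \<omega> = y}"
  define c where "c = Pt Pm (t - s) (f s) y"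
  have t0: "0 \<le> t" using s R st by auto
  have c0: "0 \<le> c" unfolding c_def by (rule Pt_nonneg[OF stoch]) (use st in simp)
  have cI: "countable I" unfolding I_def by (rule countable_PiE) (use R in auto)
  have Dm: "D ns \<in> sets M" for ns unfolding D_def
    by (intro sets.Int sets.sets_Collect_finite_All N_set_meas Z_set_meas) (use R in auto)
  have Xtm: "Xt \<in> sets M" unfolding Xt_def by (rule X_set_meas[OF t0])
  have disj: "disjoint_family_on D I"
    unfolding disjoint_family_on_def
  proof (intro ballI impI)
    fix a b assume ab: "a \<in> I" "b \<in> I" "a \<noteq> b"
    then obtain r where "r \<in> R" "a r \<noteq> b r" unfolding I_def by (metis PiE_ext UNIV_I)
    then show "D a \<inter> D b = {}" by (auto simp: D_def)
  qed
  have U1: "cyl R f = (\<Union>ns\<in>I. D ns)"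
  proof (intro equalityI subsetI)
    fix \<omega> assume w: "\<omega> \<in> cyl R f"
    then have "restrict (\<lambda>r. N r \<omega>) R \<in> I" "\<omega> \<in> D (restrict (\<lambda>r. N r \<omega>) R)"
      by (auto simp: I_def D_def cyl_def ctmc_def)
    then show "\<omega> \<in> (\<Union>ns\<in>I. D ns)" by blast
  qed (auto simp: D_def cyl_def ctmc_def)
  have U2: "cyl R f \<inter> Xt = (\<Union>ns\<in>I. D ns \<inter> Xt)" unfolding U1 by blast
  have piece: "emeasure M (D ns \<inter> Xt) = ennreal c * emeasure M (D ns)" for ns
  proof -
    have "prob (D ns \<inter> Xt) = prob (D ns) * c"
      unfolding D_def Xt_def c_def by (rule fwd_piece[OF R s st])
    then show ?thesis
      using Dm Xtm c0 by (simp add: emeasure_eq_measure ennreal_mult' mult.commute)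
  qed
  have "emeasure M (cyl R f \<inter> Xt) = (\<integral>\<^sup>+ns. emeasure M (D ns \<inter> Xt) \<partial>count_space I)"
    unfolding U2 by (rule emeasure_UN_countable[OF _ cI]) (use Dm Xtm disj in \<open>auto simp: disjoint_family_on_def\<close>)
  also have "\<dots> = (\<integral>\<^sup>+ns. ennreal c * emeasure M (D ns) \<partial>count_space I)"
    by (simp add: piece)
  also have "\<dots> = ennreal c * (\<integral>\<^sup>+ns. emeasure M (D ns) \<partial>count_space I)"
    by (rule nn_integral_cmult) simp
  also have "(\<integral>\<^sup>+ns. emeasure M (D ns) \<partial>count_space I) = emeasure M (cyl R f)"
    unfolding U1 by (rule emeasure_UN_countable[symmetric, OF _ cI disj]) (rule Dm)
  finally have "ennreal (prob (cyl R f \<inter> Xt)) = ennreal (c * prob (cyl R f))"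
    by (simp add: emeasure_eq_measure ennreal_mult' c0)
  then have "prob (cyl R f \<inter> Xt) = c * prob (cyl R f)"
    using c0 by (subst (asm) ennreal_inj) auto
  then show ?thesis unfolding Xt_def c_def by (simp add: mult.commute)
qed

end


context unif begin

lemma X0_dist: "prob {\<omega> \<in> space M. ctmc Z N 0 \<omega> = x} = p0 x"
proof -
  have "{\<omega> \<in> space M. ctmc Z N 0 \<omega> = x} = {\<omega> \<in> space M. \<forall>i\<le>0. Z i \<omega> = (\<lambda>_. x) i}"
    by (auto simp: ctmc_def N_0)
  then show ?thesis using Z_cyl[of 0 "\<lambda>_. x"] by simp
qed

lemma cyl_single: "cyl {r} (\<lambda>_. x) = {\<omega> \<in> space M. ctmc Z N r \<omega> = x}"
  by (auto simp: cyl_def)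

lemma Xt_dist:
  assumes "0 \<le> t"
  shows "prob {\<omega> \<in> space M. ctmc Z N t \<omega> = y} = (\<Sum>x\<in>UNIV. p0 x * Pt Pm t x y)"
proof -
  have U: "{\<omega> \<in> space M. ctmc Z N t \<omega> = y} = (\<Union>x\<in>UNIV. cyl {0} (\<lambda>_. x) \<inter> {\<omega> \<in> space M. ctmc Z N t \<omega> = y})"
    by (auto simp: cyl_def)
  have "prob {\<omega> \<in> space M. ctmc Z N t \<omega> = y} = (\<Sum>x\<in>UNIV. prob (cyl {0} (\<lambda>_. x) \<inter> {\<omega> \<in> space M. ctmc Z N t \<omega> = y}))"
    apply (rule trans[OF arg_cong[OF U, of prob]])
    by (intro finite_measure_finite_Union) (auto simp: disjoint_family_on_def cyl_def intro!: sets.Int cyl_meas X_set_meas assms)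
  also have "\<dots> = (\<Sum>x\<in>UNIV. p0 x * Pt Pm t x y)"
  proof (rule sum.cong[OF refl])
    fix x
    have "prob (cyl {0} (\<lambda>_. x) \<inter> {\<omega> \<in> space M. ctmc Z N t \<omega> = y}) = prob (cyl {0} (\<lambda>_. x)) * Pt Pm (t - 0) x y"
      by (rule fwd) (use assms in auto)
    then show "prob (cyl {0} (\<lambda>_. x) \<inter> {\<omega> \<in> space M. ctmc Z N t \<omega> = y}) = p0 x * Pt Pm t x y"
      by (simp add: cyl_single X0_dist)
  qed
  finally show ?thesis .
qed

lemma Xt_dist_inv:
  assumes "0 \<le> t" "invariant_distribution Pm p0"
  shows "prob {\<omega> \<in> space M. ctmc Z N t \<omega> = y} = p0 y"
  using Xt_dist[OF assms(1)] Pt_invariant[OF stoch assms(2)] by simp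

lemma bwd:
  assumes inv: "invariant_distribution Pm p0" and pos: "\<forall>x. 0 < p0 x"
  shows "finite R \<Longrightarrow> R \<noteq> {} \<Longrightarrow> R \<subseteq> {v..} \<Longrightarrow> 0 \<le> v \<Longrightarrow>
    prob ({\<omega> \<in> space M. ctmc Z N v \<omega> = x} \<inter> cyl R f)
      = p0 x * Pt Pm (Min R - v) x (f (Min R)) / p0 (f (Min R)) * prob (cyl R f)"
proof (induction "card R" arbitrary: R rule: less_induct)
  case less
  note R = less.prems
  have R0: "R \<subseteq> {0..}" using R by auto
  show ?case
  proof (cases "v \<in> R")
    case True
    then have mR: "Min R = v" using R by (intro Min_eqI) auto
    show ?thesis
    proof (cases "f v = x")
      case True
      then have "{\<omega> \<in> space M. ctmc Z N v \<omega> = x} \<inter> cyl R f = cyl R f"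
        using \<open>v \<in> R\<close> by (auto simp: cyl_def)
      then show ?thesis using mR True pos[rule_format, of x] by (simp add: Pt_zero)
    next
      case False
      then have "{\<omega> \<in> space M. ctmc Z N v \<omega> = x} \<inter> cyl R f = {}"
        using \<open>v \<in> R\<close> by (auto simp: cyl_def)
      then show ?thesis using mR False by (simp add: Pt_zero)
    qed
  next
    case vR: False
    show ?thesis
    proof (cases "card R = 1")
      case True
      then obtain r where Rr: "R = {r}" by (auto simp: card_Suc_eq)
      then have rv: "v \<le> r" using R by auto
      have "{\<omega> \<in> space M. ctmc Z N v \<omega> = x} \<inter> cyl R f = cyl {v} (\<lambda>_. x) \<inter> {\<omega> \<in> space M. ctmc Z N r \<omega> = f r}"
        by (auto simp: cyl_def Rr)
      also have "prob \<dots> = prob (cyl {v} (\<lambda>_. x)) * Pt Pm (r - v) x (f r)"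
        by (rule fwd) (use R rv in auto)
      also have "prob (cyl {v} (\<lambda>_. x)) = p0 x"
        unfolding cyl_single using Xt_dist_inv[OF R(4) inv] .
      also have "prob (cyl R f) = p0 (f r)"
        using Xt_dist_inv[OF _ inv, of r "f r"] rv R by (auto simp: Rr cyl_def)
      ultimately show ?thesis using pos[rule_format, of "f r"] by (simp add: Rr)
    next
      case False
      define m where "m = Max R"
      define R' where "R' = R - {m}"
      have mR: "m \<in> R" using R by (simp add: m_def)
      have cardR: "card R \<ge> 2" using False R by (cases "card R") (auto simp: card_eq_0_iff)
      have R'ne: "R' \<noteq> {}"
      proof
        assume "R' = {}" then have "R \<subseteq> {m}" by (auto simp: R'_def)
        then have "card R \<le> 1" using card_mono[of "{m}" R] by auto
        then show False using cardR by simp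
      qed
      have fR': "finite R'" using R by (simp add: R'_def)
      have cR': "card R' < card R" using R mR by (simp add: R'_def card_gt_0_iff)
      define m' where "m' = Max R'"
      have m'R': "m' \<in> R'" using fR' R'ne by (simp add: m'_def)
      have m'm: "m' \<le> m" using m'R' R by (auto simp: R'_def m_def)
      have m'ne: "m' \<noteq> m" using m'R' by (auto simp: R'_def)
      have minR': "Min R' = Min R"
      proof -
        have "Min R \<in> R" using R by simp
        moreover have "Min R \<noteq> m"
        proof
          assume "Min R = m"
          moreover have "Min R \<le> m'" using m'R' R by (intro Min_le) (auto simp: R'_def)
          ultimately show False using m'ne m'm by simp
        qed
        ultimately have "Min R \<in> R'" by (simp add: R'_def m_def)
        then have a: "Min R' \<le> Min R" using fR' by (intro Min_le)
        have "Min R' \<in> R'" using fR' R'ne by simp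
        then have "Min R' \<in> R" by (simp add: R'_def)
        then have "Min R \<le> Min R'" using R(1) by (intro Min_le)
        then show ?thesis using a by simp
      qed
      have vle: "v \<le> m'" using m'R' R by (auto simp: R'_def)
      have IH: "prob ({\<omega> \<in> space M. ctmc Z N v \<omega> = x} \<inter> cyl R' f)
          = p0 x * Pt Pm (Min R' - v) x (f (Min R')) / p0 (f (Min R')) * prob (cyl R' f)"
        by (rule less.hyps[OF cR' fR' R'ne]) (use R in \<open>auto simp: R'_def\<close>)
      have RR: "R = insert m R'" using mR by (auto simp: R'_def)
      have e1: "{\<omega> \<in> space M. ctmc Z N v \<omega> = x} \<inter> cyl R f
           = cyl (insert v R') (f(v := x)) \<inter> {\<omega> \<in> space M. ctmc Z N m \<omega> = f m}"
        using vR by (auto simp: cyl_def RR)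
      have e2: "cyl (insert v R') (f(v := x)) = {\<omega> \<in> space M. ctmc Z N v \<omega> = x} \<inter> cyl R' f"
        using vR by (auto simp: cyl_def R'_def)
      have e3: "cyl R f = cyl R' f \<inter> {\<omega> \<in> space M. ctmc Z N m \<omega> = f m}"
        by (auto simp: cyl_def RR)
      have A: "prob ({\<omega> \<in> space M. ctmc Z N v \<omega> = x} \<inter> cyl R f)
          = prob ({\<omega> \<in> space M. ctmc Z N v \<omega> = x} \<inter> cyl R' f) * Pt Pm (m - m') (f m') (f m)"
      proof -
        have "prob (cyl (insert v R') (f(v := x)) \<inter> {\<omega> \<in> space M. ctmc Z N m \<omega> = f m})
            = prob (cyl (insert v R') (f(v := x))) * Pt Pm (m - m') ((f(v := x)) m') (f m)"
          by (rule fwd) (use fR' R m'R' vle m'm in \<open>auto simp: R'_def m'_def\<close>)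
        then show ?thesis using vR m'R' unfolding e1 e2 by (auto simp: R'_def)
      qed
      have B: "prob (cyl R f) = prob (cyl R' f) * Pt Pm (m - m') (f m') (f m)"
        unfolding e3
        by (rule fwd) (use fR' R m'R' vle m'm in \<open>auto simp: R'_def m'_def\<close>)
      show ?thesis unfolding A B IH minR' by (simp add: mult_ac)
    qed
  qed
qed

end


definition lf :: "('s::finite \<Rightarrow> 's \<Rightarrow> real) \<Rightarrow> ('s \<Rightarrow> real) \<Rightarrow> ('s \<Rightarrow> real) \<Rightarrow> real \<Rightarrow> 's \<Rightarrow> real" where
  "lf Pm p0 q t y = (\<Sum>x\<in>UNIV. p0 x * Pt Pm t x y) / q y"

definition Gf :: "('s::finite \<Rightarrow> 's \<Rightarrow> real) \<Rightarrow> ('s \<Rightarrow> real) \<Rightarrow> ('s \<Rightarrow> real) \<Rightarrow> real \<Rightarrow> 's \<Rightarrow> real" where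
  "Gf Pm p0 q t x = (\<Sum>y\<in>UNIV - {x}. kappa_hat Pm q x y * (lf Pm p0 q t y - lf Pm p0 q t x)\<^sup>2)"

lemma kappa_hat_rowsum:
  assumes "stochastic_matrix Pm" "invariant_distribution Pm q" "q x \<noteq> 0"
  shows "(\<Sum>y\<in>UNIV. kappa_hat Pm q x y) = 0"
proof -
  have "(\<Sum>y\<in>UNIV. kappa_hat Pm q x y) = (\<Sum>y\<in>UNIV. q y * kappa Pm y x) / q x"
    by (simp add: kappa_hat_def sum_divide_distrib)
  also have "(\<Sum>y\<in>UNIV. q y * kappa Pm y x) = (\<Sum>y\<in>UNIV. q y * Pm y x) - (\<Sum>y\<in>UNIV. q y * (if y = x then 1 else 0))"
    by (simp add: kappa_def right_diff_distrib sum_subtractf)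
  also have "\<dots> = 0" using assms(2) by (simp add: invariant_distribution_def sum_mult_delta)
  finally show ?thesis by simp
qed

lemma gen_identity:
  fixes w l :: "'s::finite \<Rightarrow> real" and kh :: "'s \<Rightarrow> 's \<Rightarrow> real"
  assumes rs: "\<And>x. (\<Sum>y\<in>UNIV. kh x y) = 0"
  shows "(\<Sum>x\<in>UNIV. (- (\<Sum>z\<in>UNIV. w z * kh z x)) * (l x)\<^sup>2 + w x * (2 * l x * (\<Sum>z\<in>UNIV. kh x z * l z)))
       = - (\<Sum>x\<in>UNIV. w x * (\<Sum>y\<in>UNIV - {x}. kh x y * (l y - l x)\<^sup>2))"
proof -
  have inner: "(\<Sum>y\<in>UNIV - {x}. kh x y * (l y - l x)\<^sup>2)
      = (\<Sum>y\<in>UNIV. kh x y * (l y)\<^sup>2) - 2 * l x * (\<Sum>y\<in>UNIV. kh x y * l y)" for x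
  proof -
    have "(\<Sum>y\<in>UNIV - {x}. kh x y * (l y - l x)\<^sup>2) = (\<Sum>y\<in>UNIV. kh x y * (l y - l x)\<^sup>2)"
      by (subst sum.remove[of UNIV x]) auto
    also have "\<dots> = (\<Sum>y\<in>UNIV. kh x y * (l y)\<^sup>2 - 2 * l x * (kh x y * l y) + (l x)\<^sup>2 * kh x y)"
      by (intro sum.cong refl) (simp add: power2_eq_square algebra_simps)
    also have "\<dots> = (\<Sum>y\<in>UNIV. kh x y * (l y)\<^sup>2) - 2 * l x * (\<Sum>y\<in>UNIV. kh x y * l y) + (l x)\<^sup>2 * (\<Sum>y\<in>UNIV. kh x y)"
      by (simp add: sum.distrib sum_subtractf sum_distrib_left)
    finally show ?thesis using rs by simp
  qed
  have swap: "(\<Sum>x\<in>UNIV. (\<Sum>z\<in>UNIV. w z * kh z x) * (l x)\<^sup>2) = (\<Sum>x\<in>UNIV. w x * (\<Sum>y\<in>UNIV. kh x y * (l y)\<^sup>2))"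
  proof -
    have "(\<Sum>x\<in>UNIV. (\<Sum>z\<in>UNIV. w z * kh z x) * (l x)\<^sup>2) = (\<Sum>x\<in>UNIV. \<Sum>z\<in>UNIV. w z * (kh z x * (l x)\<^sup>2))"
      by (simp add: sum_distrib_right mult.assoc)
    also have "\<dots> = (\<Sum>z\<in>UNIV. \<Sum>x\<in>UNIV. w z * (kh z x * (l x)\<^sup>2))" by (rule sum.swap)
    also have "\<dots> = (\<Sum>x\<in>UNIV. w x * (\<Sum>y\<in>UNIV. kh x y * (l y)\<^sup>2))" by (simp add: sum_distrib_left)
    finally show ?thesis .
  qed
  have "(\<Sum>x\<in>UNIV. (- (\<Sum>z\<in>UNIV. w z * kh z x)) * (l x)\<^sup>2 + w x * (2 * l x * (\<Sum>z\<in>UNIV. kh x z * l z)))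
      = - (\<Sum>x\<in>UNIV. (\<Sum>z\<in>UNIV. w z * kh z x) * (l x)\<^sup>2) + (\<Sum>x\<in>UNIV. w x * (2 * l x * (\<Sum>z\<in>UNIV. kh x z * l z)))"
    by (simp add: sum.distrib sum_negf sum_subtractf)
  also have "\<dots> = - (\<Sum>x\<in>UNIV. w x * ((\<Sum>y\<in>UNIV. kh x y * (l y)\<^sup>2) - 2 * l x * (\<Sum>y\<in>UNIV. kh x y * l y)))"
    unfolding swap by (simp add: right_diff_distrib sum_subtractf)
  also have "\<dots> = - (\<Sum>x\<in>UNIV. w x * (\<Sum>y\<in>UNIV - {x}. kh x y * (l y - l x)\<^sup>2))"
    by (simp add: inner)
  finally show ?thesis .
qed

locale anal =
  fixes Pm :: "'s::finite \<Rightarrow> 's \<Rightarrow> real" and q p0 :: "'s \<Rightarrow> real"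
  assumes stoch: "stochastic_matrix Pm" and inv: "invariant_distribution Pm q"
    and qpos: "\<forall>x. 0 < q x"
begin

abbreviation "kh \<equiv> kappa_hat Pm q"
abbreviation "l \<equiv> lf Pm p0 q"
abbreviation "G \<equiv> Gf Pm p0 q"

lemma qnz: "q x \<noteq> 0" using qpos by (metis less_irrefl)

lemma lf_deriv: "((\<lambda>t. l t y) has_real_derivative (\<Sum>z\<in>UNIV. kh y z * l t z)) (at t)"
proof -
  have "((\<lambda>t. \<Sum>x\<in>UNIV. p0 x * Pt Pm t x y) has_real_derivative
      (\<Sum>x\<in>UNIV. p0 x * (\<Sum>z\<in>UNIV. Pt Pm t x z * kappa Pm z y))) (at t)"
    by (intro DERIV_sum DERIV_cmult Pt_deriv(1)[OF stoch])
  moreover have "(\<Sum>x\<in>UNIV. p0 x * (\<Sum>z\<in>UNIV. Pt Pm t x z * kappa Pm z y))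
      = (\<Sum>z\<in>UNIV. (\<Sum>x\<in>UNIV. p0 x * Pt Pm t x z) * kappa Pm z y)"
  proof -
    have "(\<Sum>x\<in>UNIV. p0 x * (\<Sum>z\<in>UNIV. Pt Pm t x z * kappa Pm z y))
        = (\<Sum>x\<in>UNIV. \<Sum>z\<in>UNIV. p0 x * Pt Pm t x z * kappa Pm z y)"
      by (simp add: sum_distrib_left mult.assoc)
    also have "\<dots> = (\<Sum>z\<in>UNIV. \<Sum>x\<in>UNIV. p0 x * Pt Pm t x z * kappa Pm z y)" by (rule sum.swap)
    also have "\<dots> = (\<Sum>z\<in>UNIV. (\<Sum>x\<in>UNIV. p0 x * Pt Pm t x z) * kappa Pm z y)"
      by (simp add: sum_distrib_right)
    finally show ?thesis .
  qed
  ultimately have D: "((\<lambda>t. \<Sum>x\<in>UNIV. p0 x * Pt Pm t x y) has_real_derivative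
      (\<Sum>z\<in>UNIV. (\<Sum>x\<in>UNIV. p0 x * Pt Pm t x z) * kappa Pm z y)) (at t)" by simp
  have eq: "(\<Sum>z\<in>UNIV. (\<Sum>x\<in>UNIV. p0 x * Pt Pm t x z) * kappa Pm z y) / q y = (\<Sum>z\<in>UNIV. kh y z * l t z)"
  proof -
    have "(\<Sum>z\<in>UNIV. (\<Sum>x\<in>UNIV. p0 x * Pt Pm t x z) * kappa Pm z y) / q y
        = (\<Sum>z\<in>UNIV. (\<Sum>x\<in>UNIV. p0 x * Pt Pm t x z) * kappa Pm z y / q y)"
      by (rule sum_divide_distrib)
    also have "\<dots> = (\<Sum>z\<in>UNIV. (q z * kappa Pm z y / q y) * ((\<Sum>x\<in>UNIV. p0 x * Pt Pm t x z) / q z))"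
      by (intro sum.cong refl) (simp add: qnz)
    finally show ?thesis by (simp add: lf_def kappa_hat_def)
  qed
  have "((\<lambda>t. l t y) has_real_derivative (\<Sum>z\<in>UNIV. (\<Sum>x\<in>UNIV. p0 x * Pt Pm t x z) * kappa Pm z y) / q y) (at t)"
    unfolding lf_def by (rule DERIV_cdivide[OF D])
  then show ?thesis using eq by simp
qed

lemma lf_cont: "isCont (\<lambda>t. l t y) t"
  using lf_deriv by (rule DERIV_isCont)

lemma Phi_deriv:
  fixes w :: "real \<Rightarrow> 's \<Rightarrow> real"
  assumes wd: "\<And>x. ((\<lambda>v. w v x) has_real_derivative (- (\<Sum>z\<in>UNIV. w v z * kh z x))) (at v)"
  shows "((\<lambda>v. \<Sum>x\<in>UNIV. w v x * (l v x)\<^sup>2) has_real_derivative (- (\<Sum>x\<in>UNIV. w v x * G v x))) (at v)"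
proof -
  have "((\<lambda>v. \<Sum>x\<in>UNIV. w v x * (l v x)\<^sup>2) has_real_derivative
     (\<Sum>x\<in>UNIV. (- (\<Sum>z\<in>UNIV. w v z * kh z x)) * (l v x)\<^sup>2 + w v x * (2 * l v x * (\<Sum>z\<in>UNIV. kh x z * l v z)))) (at v)"
  proof (intro DERIV_sum)
    fix x
    have p: "((\<lambda>v. (l v x)\<^sup>2) has_real_derivative (2 * l v x * (\<Sum>z\<in>UNIV. kh x z * l v z))) (at v)"
      using DERIV_power[OF lf_deriv[of x v], of 2] by (simp add: mult_ac)
    show "((\<lambda>v. w v x * (l v x)\<^sup>2) has_real_derivative
        (- (\<Sum>z\<in>UNIV. w v z * kh z x)) * (l v x)\<^sup>2 + w v x * (2 * l v x * (\<Sum>z\<in>UNIV. kh x z * l v z))) (at v)"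
      using DERIV_mult[OF wd[of x] p] by (simp add: mult.commute)
  qed
  moreover have "(\<Sum>x\<in>UNIV. (- (\<Sum>z\<in>UNIV. w v z * kh z x)) * (l v x)\<^sup>2 + w v x * (2 * l v x * (\<Sum>z\<in>UNIV. kh x z * l v z)))
      = - (\<Sum>x\<in>UNIV. w v x * G v x)"
    unfolding Gf_def
    by (rule gen_identity[of kh "w v" "l v"]) (rule kappa_hat_rowsum[OF stoch inv qnz])
  ultimately show ?thesis by simp
qed

lemma weight_a:
  "((\<lambda>v. q x * Pt Pm (r - v) x y0) has_real_derivative (- (\<Sum>z\<in>UNIV. q z * Pt Pm (r - v) z y0 * kh z x))) (at v)"
proof -
  have d1: "((\<lambda>v. r - v) has_real_derivative -1) (at v)"
    by (auto intro!: derivative_eq_intros)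
  have "((\<lambda>v. Pt Pm (r - v) x y0) has_real_derivative (\<Sum>z\<in>UNIV. kappa Pm x z * Pt Pm (r - v) z y0) * -1) (at v)"
    using DERIV_chain2[OF Pt_deriv(2)[OF stoch] d1] by simp
  then have "((\<lambda>v. q x * Pt Pm (r - v) x y0) has_real_derivative q x * ((\<Sum>z\<in>UNIV. kappa Pm x z * Pt Pm (r - v) z y0) * -1)) (at v)"
    by (rule DERIV_cmult)
  moreover have "q x * ((\<Sum>z\<in>UNIV. kappa Pm x z * Pt Pm (r - v) z y0) * -1) = - (\<Sum>z\<in>UNIV. q z * Pt Pm (r - v) z y0 * kh z x)"
    by (simp add: sum_distrib_left kappa_hat_def qnz field_simps flip: sum_negf)
  ultimately show ?thesis by simp
qed

lemma weight_b:
  "((\<lambda>v. q x) has_real_derivative (- (\<Sum>z\<in>UNIV. q z * kh z x))) (at v)"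
proof -
  have "(\<Sum>z\<in>UNIV. q z * kh z x) = (\<Sum>z\<in>UNIV. q x * kappa Pm x z)"
    by (intro sum.cong refl) (simp add: kappa_hat_def qnz)
  also have "\<dots> = q x * ((\<Sum>z\<in>UNIV. Pm x z) - 1)"
    by (simp add: kappa_def sum_distrib_left[symmetric] sum_subtractf sum_delta_mult right_diff_distrib)
  also have "\<dots> = 0" using stoch by (simp add: stochastic_matrix_def)
  finally show ?thesis by simp
qed

lemma Pt_cont: "isCont (\<lambda>t. Pt Pm t x y) t"
  using Pt_deriv(1)[OF stoch] by (rule DERIV_isCont)

lemma G_cont: "isCont (\<lambda>t. G t x) t"
  unfolding Gf_def by (intro continuous_intros lf_cont)

end


lemma q_pos_irred:
  assumes stoch: "stochastic_matrix Pm" and irred: "irreducible_matrix Pm"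
    and inv: "invariant_distribution Pm q"
  shows "0 < q y"
proof -
  have qnn: "\<And>x. 0 \<le> q x" and qs: "(\<Sum>x\<in>UNIV. q x) = 1"
    using inv by (auto simp: invariant_distribution_def prob_vector_def)
  obtain x where x: "0 < q x"
  proof (rule ccontr)
    assume "\<not> thesis"
    then have "\<forall>x. q x \<le> 0" using that by (meson not_le)
    then have "(\<Sum>x\<in>UNIV. q x) \<le> 0" by (simp add: sum_nonpos)
    then show False using qs by simp
  qed
  have "(x, y) \<in> {(a, b). 0 < Pm a b}\<^sup>*" using irred by (simp add: irreducible_matrix_def)
  then show ?thesis
  proof (induction rule: rtrancl_induct)
    case base then show ?case using x .
  next
    case (step b c)
    then have "0 < Pm b c" by simp
    have "q b * Pm b c \<le> (\<Sum>z\<in>UNIV. q z * Pm z c)"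
      by (rule member_le_sum) (use qnn stoch in \<open>auto simp: stochastic_matrix_def\<close>)
    also have "\<dots> = q c" using inv by (simp add: invariant_distribution_def)
    finally show ?case using step \<open>0 < Pm b c\<close> by (smt (verit) mult_pos_pos)
  qed
qed

locale main =
  fixes Pm :: "'s::finite \<Rightarrow> 's \<Rightarrow> real" and q p0 :: "'s \<Rightarrow> real"
    and P Q :: "'w measure" and Z :: "nat \<Rightarrow> 'w \<Rightarrow> 's" and N :: "real \<Rightarrow> 'w \<Rightarrow> nat" and T :: real
  assumes stoch: "stochastic_matrix Pm"
    and irred: "irreducible_matrix Pm"
    and inv: "invariant_distribution Pm q"
    and P_setting: "uniformized_chain_setting P Z N p0 Pm"
    and Q_setting: "uniformized_chain_setting Q Z N q Pm"
    and T_pos: "0 < T"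
begin

lemma qpos: "\<forall>x. 0 < q x" using q_pos_irred[OF stoch irred inv] by blast

sublocale PP: unif P Z N p0 Pm using P_setting stoch by unfold_locales
sublocale QQ: unif Q Z N q Pm using Q_setting stoch by unfold_locales
sublocale AN: anal Pm q p0 using stoch inv qpos by unfold_locales

abbreviation "X \<equiv> ctmc Z N"
abbreviation "Xs t x \<equiv> {\<omega> \<in> space Q. X t \<omega> = x}"
abbreviation "Fs \<equiv> natural_filtration Q (\<lambda>s. ctmc Z N (T - s))"

lemma lratio_eq: "0 \<le> t \<Longrightarrow> lratio P Z N q t y = lf Pm p0 q t y"
  unfolding lratio_def lf_def using PP.Xt_dist by simp

lemma lf_bounds: "0 \<le> t \<Longrightarrow> 0 \<le> lf Pm p0 q t y \<and> lf Pm p0 q t y \<le> 1 / q y"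
proof -
  assume t: "0 \<le> t"
  have "lf Pm p0 q t y = PP.prob {\<omega> \<in> space P. X t \<omega> = y} / q y"
    using lratio_eq[OF t] by (simp add: lratio_def)
  then show ?thesis using qpos[rule_format, of y]
    by (simp add: divide_right_mono)
qed

definition "Bd = (\<Sum>y\<in>UNIV. 1 / q y)"
definition "Kd = (\<Sum>x\<in>UNIV. \<Sum>y\<in>UNIV. \<bar>kappa_hat Pm q x y\<bar>) * Bd\<^sup>2"

lemma inv_le_Bd: "1 / q y \<le> Bd"
  unfolding Bd_def by (rule member_le_sum[where f="\<lambda>y. 1 / q y"]) (use qpos in \<open>auto intro: less_imp_le\<close>)

lemma lf_le_Bd: "0 \<le> t \<Longrightarrow> \<bar>lf Pm p0 q t y\<bar> \<le> Bd"
proof -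
  assume t: "0 \<le> t"
  have "1 / q y \<le> Bd" by (rule inv_le_Bd)
  then show ?thesis using lf_bounds[OF t, of y] by simp
qed

lemma G_le_Kd: "0 \<le> t \<Longrightarrow> \<bar>Gf Pm p0 q t x\<bar> \<le> Kd"
proof -
  assume t: "0 \<le> t"
  have "\<And>y. 0 \<le> 1 / q y" using qpos by (simp add: less_imp_le)
  then have Bd0: "0 \<le> Bd" unfolding Bd_def by (intro sum_nonneg) auto
  have d: "\<bar>lf Pm p0 q t y - lf Pm p0 q t x\<bar> \<le> Bd" for y
  proof -
    have "1 / q y \<le> Bd" "1 / q x \<le> Bd" by (rule inv_le_Bd)+
    then show ?thesis using lf_bounds[OF t, of y] lf_bounds[OF t, of x] by linarith
  qed
  have "\<bar>Gf Pm p0 q t x\<bar> \<le> (\<Sum>y\<in>UNIV - {x}. \<bar>kappa_hat Pm q x y * (lf Pm p0 q t y - lf Pm p0 q t x)\<^sup>2\<bar>)"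
    unfolding Gf_def by (rule sum_abs)
  also have "\<dots> \<le> (\<Sum>y\<in>UNIV - {x}. \<bar>kappa_hat Pm q x y\<bar> * Bd\<^sup>2)"
  proof (rule sum_mono)
    fix y
    have "(lf Pm p0 q t y - lf Pm p0 q t x)\<^sup>2 \<le> Bd\<^sup>2"
      using d[of y] Bd0 by (metis abs_le_square_iff abs_of_nonneg)
    then show "\<bar>kappa_hat Pm q x y * (lf Pm p0 q t y - lf Pm p0 q t x)\<^sup>2\<bar> \<le> \<bar>kappa_hat Pm q x y\<bar> * Bd\<^sup>2"
      by (simp add: abs_mult mult_left_mono)
  qed
  also have "\<dots> \<le> (\<Sum>y\<in>UNIV. \<bar>kappa_hat Pm q x y\<bar> * Bd\<^sup>2)"
    by (rule sum_mono2) auto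
  also have "\<dots> \<le> (\<Sum>x\<in>UNIV. \<Sum>y\<in>UNIV. \<bar>kappa_hat Pm q x y\<bar> * Bd\<^sup>2)"
    by (rule member_le_sum[where f="\<lambda>x. \<Sum>y\<in>UNIV. \<bar>kappa_hat Pm q x y\<bar> * Bd\<^sup>2"]) (auto intro: sum_nonneg)
  also have "\<dots> = Kd" by (simp add: Kd_def sum_distrib_right)
  finally show ?thesis .
qed

definition "Gens s = {{\<omega> \<in> space Q. ctmc Z N (T - u) \<omega> = y} | u y. 0 \<le> u \<and> u \<le> s}"

lemma Gens_sub: "Gens s \<subseteq> Pow (space Q)" by (auto simp: Gens_def)

lemma sets_Fs: "sets (Fs s) = sigma_sets (space Q) (Gens s)"
  unfolding natural_filtration_def Gens_def[symmetric] using Gens_sub by (simp add: sets_measure_of)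

lemma space_Fs: "space (Fs s) = space Q"
  unfolding natural_filtration_def Gens_def[symmetric] using Gens_sub by (simp add: space_measure_of_conv)

lemma Xs_in_Fs: "T - s \<le> \<tau> \<Longrightarrow> \<tau> \<le> T \<Longrightarrow> Xs \<tau> x \<in> sets (Fs s)"
  unfolding sets_Fs by (rule sigma_sets.Basic) (auto simp: Gens_def intro!: exI[of _ "T - \<tau>"] exI[of _ x])

lemma Gens_sets: "s \<le> T \<Longrightarrow> Gens s \<subseteq> sets Q"
  by (auto simp: Gens_def intro!: QQ.X_set_meas)

lemma subalg: "s \<le> T \<Longrightarrow> subalgebra Q (Fs s)"
  unfolding subalgebra_def sets_Fs space_Fs
  using Gens_sets by (auto intro!: sets.sigma_sets_subset)

lemma Fs_mono: "s \<le> t \<Longrightarrow> sets (Fs s) \<subseteq> sets (Fs t)"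
  unfolding sets_Fs by (rule sigma_sets_subseteq) (auto simp: Gens_def)

lemma X_meas_Fs: "0 \<le> s \<Longrightarrow> X (T - s) \<in> measurable (Fs s) (count_space UNIV)"
  unfolding measurable_count_space_eq2[OF finite_class.finite_UNIV]
proof (intro conjI ballI)
  assume "0 \<le> s"
  fix x :: 's
  have "X (T - s) -` {x} \<inter> space (Fs s) = Xs (T - s) x" by (auto simp: space_Fs)
  then show "X (T - s) -` {x} \<inter> space (Fs s) \<in> sets (Fs s)" using Xs_in_Fs[of s "T - s" x] \<open>0 \<le> s\<close> by simp
qed auto

definition "dy (n::nat) (u::real) = real_of_int \<lfloor>u * 2 ^ n\<rfloor> / 2 ^ n"

lemma dy_le: "dy n u \<le> u"
proof -
  have "real_of_int \<lfloor>u * 2 ^ n\<rfloor> \<le> u * 2 ^ n" by (rule of_int_floor_le)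
  then show ?thesis by (simp add: dy_def divide_le_eq)
qed

lemma dy_close: "u - dy n u < 1 / 2 ^ n"
proof -
  have "u * 2 ^ n < real_of_int \<lfloor>u * 2 ^ n\<rfloor> + 1" by (rule real_of_int_floor_add_one_gt)
  then have "u < (real_of_int \<lfloor>u * 2 ^ n\<rfloor> + 1) / 2 ^ n" by (simp add: pos_less_divide_eq)
  then show ?thesis by (simp add: dy_def add_divide_distrib)
qed

lemma X_rc:
  assumes w: "\<omega> \<in> space Q" and t0: "0 \<le> t0"
  shows "\<exists>b>t0. \<forall>\<tau>. t0 \<le> \<tau> \<and> \<tau> < b \<longrightarrow> X \<tau> \<omega> = X t0 \<omega>"
proof -
  have "\<forall>\<^sub>F s in at_right t0. N s \<omega> = N t0 \<omega>" by (rule QQ.N_rc[OF w t0])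
  then obtain b where b: "b > t0" "\<forall>y>t0. y < b \<longrightarrow> N y \<omega> = N t0 \<omega>"
    unfolding eventually_at_right_field by blast
  show ?thesis
  proof (intro exI[of _ b] conjI allI impI)
    fix \<tau> assume "t0 \<le> \<tau> \<and> \<tau> < b"
    then show "X \<tau> \<omega> = X t0 \<omega>" using b by (cases "\<tau> = t0") (auto simp: ctmc_def)
  qed (use b in auto)
qed

lemma joint_ind_meas:
  fixes B :: "'w measure"
  assumes sp: "space B = space Q" and s': "0 \<le> s'" "s' \<le> T"
    and XB: "\<And>\<tau>. T - s' \<le> \<tau> \<Longrightarrow> \<tau> \<le> T \<Longrightarrow> Xs \<tau> x \<in> sets B"
  shows "(\<lambda>z. indicator {0..s'} (snd z) * indicator (Xs (T - snd z) x) (fst z) :: real) \<in> borel_measurable (B \<Otimes>\<^sub>M lborel)"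
proof (rule borel_measurable_LIMSEQ_real)
  define F where "F n k z = (if 0 \<le> k \<and> real_of_int k / 2 ^ n \<le> s'
      then indicator {0..s'} (snd z) * indicator (Xs (T - real_of_int k / 2 ^ n) x) (fst z) else (0::real))"
    for n :: nat and k :: int and z :: "'w \<times> real"
  define A where "A n z = F n \<lfloor>snd z * 2 ^ n\<rfloor> z" for n z
  show "A n \<in> borel_measurable (B \<Otimes>\<^sub>M lborel)" for n
    unfolding A_def
  proof (rule measurable_compose_countable[where f="F n"])
    fix k :: int
    show "F n k \<in> borel_measurable (B \<Otimes>\<^sub>M lborel)"
    proof (cases "0 \<le> k \<and> real_of_int k / 2 ^ n \<le> s'")
      case True
      then have "Xs (T - real_of_int k / 2 ^ n) x \<in> sets B"
        using s' by (intro XB) (auto simp: divide_nonneg_nonneg)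
      then show ?thesis using True unfolding F_def by measurable
    next
      case False
      then have "F n k = (\<lambda>z. 0)" by (auto simp: F_def fun_eq_iff)
      then show ?thesis by simp
    qed
  next
    show "(\<lambda>z::'w \<times> real. \<lfloor>snd z * 2 ^ n\<rfloor>) \<in> measurable (B \<Otimes>\<^sub>M lborel) (count_space UNIV)"
      by measurable
  qed
  fix z :: "'w \<times> real" assume z: "z \<in> space (B \<Otimes>\<^sub>M lborel)"
  obtain \<omega> u where zu: "z = (\<omega>, u)" by (cases z)
  have w: "\<omega> \<in> space Q" using z sp zu by (simp add: space_pair_measure)
  show "(\<lambda>n. A n z) \<longlonglongrightarrow> indicator {0..s'} (snd z) * indicator (Xs (T - snd z) x) (fst z)"
  proof (cases "0 \<le> u \<and> u \<le> s'")
    case False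
    have "A n z = 0" for n
    proof -
      have "0 \<le> \<lfloor>u * 2 ^ n\<rfloor> \<Longrightarrow> 0 \<le> u"
        by (metis floor_less_zero not_le zero_le_mult_iff zero_less_power zero_less_numeral less_le_not_le)
      then show ?thesis using False by (auto simp: A_def F_def zu)
    qed
    then show ?thesis using False by (simp add: zu)
  next
    case True
    have An: "A n z = indicator (Xs (T - dy n u) x) \<omega>" for n
    proof -
      have "0 \<le> \<lfloor>u * 2 ^ n\<rfloor>" using True by simp
      moreover have "real_of_int \<lfloor>u * 2 ^ n\<rfloor> / 2 ^ n \<le> s'" using dy_le[of n u] True by (simp add: dy_def)
      ultimately show ?thesis using True by (simp add: A_def F_def zu dy_def)
    qed
    obtain b where b: "b > T - u" "\<forall>\<tau>. T - u \<le> \<tau> \<and> \<tau> < b \<longrightarrow> X \<tau> \<omega> = X (T - u) \<omega>"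
      using X_rc[OF w, of "T - u"] True s' by auto
    have "(\<lambda>n. (1/2::real) ^ n) \<longlonglongrightarrow> 0" by (rule LIMSEQ_realpow_zero) auto
    then have "\<forall>\<^sub>F n in sequentially. (1/2::real) ^ n < b - (T - u)"
      using b(1) by (intro order_tendstoD(2)) auto
    then have "\<forall>\<^sub>F n in sequentially. A n z = indicator {0..s'} (snd z) * indicator (Xs (T - snd z) x) (fst z)"
    proof (rule eventually_mono)
      fix n assume n: "(1/2::real) ^ n < b - (T - u)"
      have "T - u \<le> T - dy n u" using dy_le[of n u] by simp
      moreover have "T - dy n u < b" using dy_close[of u n] n by (simp add: power_one_over)
      ultimately have "X (T - dy n u) \<omega> = X (T - u) \<omega>" using b by blast
      then show "A n z = indicator {0..s'} (snd z) * indicator (Xs (T - snd z) x) (fst z)"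
        using True w by (simp add: An[unfolded zu] zu indicator_def)
    qed
    then show ?thesis by (rule tendsto_eventually)
  qed
qed

end


context main begin

lemma Gc_meas[measurable]: "(\<lambda>u. Gf Pm p0 q (T - u) x) \<in> borel_measurable borel"
proof (rule borel_measurable_continuous_onI)
  have "isCont (\<lambda>u. Gf Pm p0 q (T - u) x) u" for u
    by (rule isCont_o2[OF _ AN.G_cont]) (intro continuous_intros)
  then show "continuous_on UNIV (\<lambda>u. Gf Pm p0 q (T - u) x)"
    by (simp add: continuous_on_eq_continuous_at)
qed

definition "gi \<omega> u = Gf Pm p0 q (T - u) (X (T - u) \<omega>)"

lemma joint_gi:
  fixes B :: "'w measure"
  assumes sp: "space B = space Q" and s': "0 \<le> s'" "s' \<le> T"
    and XB: "\<And>\<tau> x. T - s' \<le> \<tau> \<Longrightarrow> \<tau> \<le> T \<Longrightarrow> Xs \<tau> x \<in> sets B"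
    and S: "S \<in> sets borel" "S \<subseteq> {0..s'}"
  shows "(\<lambda>z. indicator S (snd z) * gi (fst z) (snd z)) \<in> borel_measurable (B \<Otimes>\<^sub>M lborel)"
proof -
  have J: "(\<lambda>z. indicator {0..s'} (snd z) * indicator (Xs (T - snd z) x) (fst z) :: real) \<in> borel_measurable (B \<Otimes>\<^sub>M lborel)" for x
    by (rule joint_ind_meas[OF sp s']) (rule XB)
  have eq: "indicator S (snd z) * gi (fst z) (snd z)
      = indicator S (snd z) * (\<Sum>x\<in>UNIV. Gf Pm p0 q (T - snd z) x * (indicator {0..s'} (snd z) * indicator (Xs (T - snd z) x) (fst z)))"
    if z: "z \<in> space (B \<Otimes>\<^sub>M lborel)" for z
  proof (cases "snd z \<in> S")
    case True
    have u: "snd z \<in> {0..s'}" using True S(2) by blast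
    have w: "fst z \<in> space Q" using z sp by (simp add: space_pair_measure mem_Times_iff)
    have "(\<Sum>x\<in>UNIV. Gf Pm p0 q (T - snd z) x * (indicator {0..s'} (snd z) * indicator (Xs (T - snd z) x) (fst z)))
        = (\<Sum>x\<in>UNIV. Gf Pm p0 q (T - snd z) x * (if x = X (T - snd z) (fst z) then 1 else 0))"
    proof (intro sum.cong refl)
      fix x
      have "indicator {0..s'} (snd z) = (1::real)" using u by simp
      moreover have "indicator (Xs (T - snd z) x) (fst z) = (if x = X (T - snd z) (fst z) then 1 else (0::real))"
        using w by (auto simp: indicator_def)
      ultimately show "Gf Pm p0 q (T - snd z) x * (indicator {0..s'} (snd z) * indicator (Xs (T - snd z) x) (fst z))
          = Gf Pm p0 q (T - snd z) x * (if x = X (T - snd z) (fst z) then 1 else 0)" by (simp only: mult_1)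
    qed
    also have "\<dots> = gi (fst z) (snd z)" unfolding gi_def by (rule sum_mult_delta)
    finally show ?thesis by (simp only:)
  next
    case False
    then have "indicator S (snd z) = (0::real)" by (simp add: indicator_def)
    then show ?thesis by (simp only: mult_zero_left)
  qed
  have M: "(\<lambda>z. indicator S (snd z) * (\<Sum>x\<in>UNIV. Gf Pm p0 q (T - snd z) x * (indicator {0..s'} (snd z) * indicator (Xs (T - snd z) x) (fst z)))) \<in> borel_measurable (B \<Otimes>\<^sub>M lborel)"
  proof -
    have I1: "(\<lambda>z. indicator S (snd z) :: real) \<in> borel_measurable (B \<Otimes>\<^sub>M lborel)"
      by (rule measurable_compose[OF measurable_snd]) (simp add: S(1) borel_measurable_indicator)
    have I2: "(\<lambda>z. Gf Pm p0 q (T - snd z) x) \<in> borel_measurable (B \<Otimes>\<^sub>M lborel)" for x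
      by (rule measurable_compose[OF measurable_snd]) (simp add: Gc_meas)
    show ?thesis by (intro borel_measurable_times borel_measurable_sum I1 I2 J)
  qed
  show ?thesis by (rule iffD2[OF measurable_cong[OF eq] M])
qed


lemma gi_meas:
  assumes w: "\<omega> \<in> space Q" and S: "S \<in> sets borel" "S \<subseteq> {0..T}"
  shows "(\<lambda>u. indicator S u * gi \<omega> u) \<in> borel_measurable lborel"
proof -
  have "(\<lambda>z. indicator S (snd z) * gi (fst z) (snd z)) \<in> borel_measurable (Q \<Otimes>\<^sub>M lborel)"
    by (rule joint_gi[OF refl _ order_refl _ S]) (use T_pos in \<open>auto intro: QQ.X_set_meas\<close>)
  from measurable_Pair2[OF this w] show ?thesis by simp
qed

lemma gi_bound: "u \<in> {0..T} \<Longrightarrow> \<bar>gi \<omega> u\<bar> \<le> Kd"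
  unfolding gi_def by (rule G_le_Kd) simp

lemma gi_set_integrable:
  assumes w: "\<omega> \<in> space Q" and S: "S \<in> sets borel" "S \<subseteq> {0..T}"
  shows "set_integrable lborel S (gi \<omega>)"
  unfolding set_integrable_def
proof (rule integrableI_bounded_set[where A="{0..T}" and B=Kd])
  show "(\<lambda>u. indicator S u *\<^sub>R gi \<omega> u) \<in> borel_measurable lborel"
    using gi_meas[OF w S] by simp
  show "AE u in lborel. u \<in> {0..T} \<longrightarrow> norm (indicator S u *\<^sub>R gi \<omega> u) \<le> Kd"
  proof (rule AE_I2, intro impI)
    fix u assume u: "u \<in> {0..T}"
    have "0 \<le> Kd" using gi_bound[OF u, of \<omega>] by simp
    then show "norm (indicator S u *\<^sub>R gi \<omega> u) \<le> Kd" using gi_bound[OF u, of \<omega>]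
      by (auto simp: indicator_def)
  qed
  show "AE u in lborel. u \<notin> {0..T} \<longrightarrow> indicator S u *\<^sub>R gi \<omega> u = 0"
    by (rule AE_I2) (use S(2) in \<open>auto simp: indicator_def\<close>)
qed (auto simp: emeasure_lborel_Icc_eq)

lemma JI_bound:
  assumes w: "\<omega> \<in> space Q" and s: "0 \<le> s" "s \<le> T"
  shows "\<bar>LINT u:{0..s}|lborel. gi \<omega> u\<bar> \<le> Kd * s"
proof -
  have si: "set_integrable lborel {0..s} (gi \<omega>)" by (rule gi_set_integrable[OF w]) (use s in auto)
  have "\<bar>LINT u:{0..s}|lborel. gi \<omega> u\<bar> \<le> (LINT u:{0..s}|lborel. norm (gi \<omega> u))"
    using set_integral_norm_bound[OF si] by simp
  also have "\<dots> \<le> (LINT u:{0..s}|lborel. Kd)"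
  proof (rule set_integral_mono)
    show "set_integrable lborel {0..s} (\<lambda>u. norm (gi \<omega> u))"
      using si by (rule set_integrable_norm)
    have "integrable lborel (\<lambda>u. indicator {0..s} u * Kd)"
      by (intro integrable_mult_left integrable_real_indicator) (auto simp: emeasure_lborel_Icc_eq)
    then show "set_integrable lborel {0..s} (\<lambda>u. Kd)" by (simp add: set_integrable_def)
    show "\<And>u. u \<in> {0..s} \<Longrightarrow> norm (gi \<omega> u) \<le> Kd" using gi_bound s by auto
  qed
  also have "\<dots> = Kd * s" using s by (simp add: set_integral_const)
  finally show ?thesis .
qed

definition "Yp s \<omega> = (lf Pm p0 q (T - s) (X (T - s) \<omega>))\<^sup>2 - (LINT u:{0..s}|lborel. gi \<omega> u)"

lemma Yp_meas:
  assumes s: "0 \<le> s" "s \<le> T"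
  shows "Yp s \<in> borel_measurable (Fs s)"
proof -
  have m1: "(\<lambda>\<omega>. (lf Pm p0 q (T - s) (X (T - s) \<omega>))\<^sup>2) \<in> borel_measurable (Fs s)"
    by (rule measurable_compose[OF X_meas_Fs[OF s(1)]]) simp
  have j: "(\<lambda>z. indicator {0..s} (snd z) * gi (fst z) (snd z)) \<in> borel_measurable (Fs s \<Otimes>\<^sub>M lborel)"
    by (rule joint_gi[OF space_Fs s]) (auto intro: Xs_in_Fs)
  have "(\<lambda>\<omega>. \<integral>u. indicator {0..s} u * gi \<omega> u \<partial>lborel) \<in> borel_measurable (Fs s)"
    by (rule lborel.borel_measurable_lebesgue_integral) (use j in \<open>simp add: split_beta'\<close>)
  then have m2: "(\<lambda>\<omega>. LINT u:{0..s}|lborel. gi \<omega> u) \<in> borel_measurable (Fs s)"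
    by (simp add: set_lebesgue_integral_def)
  show ?thesis unfolding Yp_def using m1 m2 by (rule borel_measurable_diff)
qed

lemma Yp_meas_Q: "0 \<le> s \<Longrightarrow> s \<le> T \<Longrightarrow> Yp s \<in> borel_measurable Q"
  using measurable_from_subalg[OF subalg Yp_meas] by blast

lemma Yp_int:
  assumes s: "0 \<le> s" "s \<le> T"
  shows "integrable Q (Yp s)"
proof (rule QQ.integrable_const_bound[where B="Bd\<^sup>2 + Kd * T"])
  show "Yp s \<in> borel_measurable Q" by (rule Yp_meas_Q[OF s])
  show "AE \<omega> in Q. norm (Yp s \<omega>) \<le> Bd\<^sup>2 + Kd * T"
  proof (rule AE_I2)
    fix \<omega> assume w: "\<omega> \<in> space Q"
    have "\<bar>lf Pm p0 q (T - s) (X (T - s) \<omega>)\<bar> \<le> Bd" using lf_le_Bd[of "T - s"] s by simp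
    then have "\<bar>lf Pm p0 q (T - s) (X (T - s) \<omega>)\<bar>\<^sup>2 \<le> Bd\<^sup>2" by (rule power_mono) simp
    then have a: "(lf Pm p0 q (T - s) (X (T - s) \<omega>))\<^sup>2 \<le> Bd\<^sup>2" by simp
    have b: "\<bar>LINT u:{0..s}|lborel. gi \<omega> u\<bar> \<le> Kd * T"
    proof -
      have "0 \<le> Kd" using gi_bound[of 0 \<omega>] T_pos by simp
      then have "Kd * s \<le> Kd * T" using s by (simp add: mult_left_mono)
      then show ?thesis using JI_bound[OF w s] by simp
    qed
    have a0: "0 \<le> (lf Pm p0 q (T - s) (X (T - s) \<omega>))\<^sup>2" by simp
    show "norm (Yp s \<omega>) \<le> Bd\<^sup>2 + Kd * T"
      unfolding Yp_def real_norm_def abs_le_iff using a a0 b[unfolded abs_le_iff] by linarith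
  qed
qed

lemma JI_split:
  assumes w: "\<omega> \<in> space Q" and st: "0 \<le> s" "s \<le> t" "t \<le> T"
  shows "(LINT u:{0..t}|lborel. gi \<omega> u) = (LINT u:{0..s}|lborel. gi \<omega> u) + (LINT u:{s<..t}|lborel. gi \<omega> u)"
proof -
  have e: "{0..t} = {0..s} \<union> {s<..t}" using st by auto
  have si1: "set_integrable lborel {0..s} (gi \<omega>)" by (rule gi_set_integrable[OF w]) (use st in auto)
  have si2: "set_integrable lborel {s<..t} (gi \<omega>)" by (rule gi_set_integrable[OF w]) (use st in auto)
  show ?thesis unfolding e by (rule set_integral_Un[OF _ si1 si2]) auto
qed

lemma E_ind:
  assumes A: "A \<in> sets Q" and t: "0 \<le> \<tau>"
  shows "(\<integral>\<omega>. indicator A \<omega> * h (X \<tau> \<omega>) \<partial>Q) = (\<Sum>x\<in>UNIV. h x * QQ.prob (Xs \<tau> x \<inter> A))"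
proof -
  have "(\<integral>\<omega>. indicator A \<omega> * h (X \<tau> \<omega>) \<partial>Q) = (\<integral>\<omega>. (\<Sum>x\<in>UNIV. h x * indicator (Xs \<tau> x \<inter> A) \<omega>) \<partial>Q)"
  proof (rule Bochner_Integration.integral_cong[OF refl])
    fix \<omega> assume w: "\<omega> \<in> space Q"
    have "(\<Sum>x\<in>UNIV. h x * indicator (Xs \<tau> x \<inter> A) \<omega>) = (\<Sum>x\<in>UNIV. (indicator A \<omega> * h x) * (if x = X \<tau> \<omega> then 1 else 0))"
      using w by (intro sum.cong refl) (auto simp: indicator_def)
    also have "\<dots> = indicator A \<omega> * h (X \<tau> \<omega>)" by (rule sum_mult_delta)
    finally show "indicator A \<omega> * h (X \<tau> \<omega>) = (\<Sum>x\<in>UNIV. h x * indicator (Xs \<tau> x \<inter> A) \<omega>)" by simp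
  qed
  also have "\<dots> = (\<Sum>x\<in>UNIV. h x * QQ.prob (Xs \<tau> x \<inter> A))"
  proof (subst Bochner_Integration.integral_sum)
    show "integrable Q (\<lambda>\<omega>. h x * indicator (Xs \<tau> x \<inter> A) \<omega>)" for x
      using A QQ.X_set_meas[OF t] by (intro integrable_mult_right integrable_real_indicator) (auto simp: QQ.emeasure_finite less_top[symmetric])
    show "(\<Sum>x\<in>UNIV. \<integral>\<omega>. h x * indicator (Xs \<tau> x \<inter> A) \<omega> \<partial>Q) = (\<Sum>x\<in>UNIV. h x * QQ.prob (Xs \<tau> x \<inter> A))"
    proof (intro sum.cong refl)
      fix x
      have "Xs \<tau> x \<inter> (A \<inter> space Q) = Xs \<tau> x \<inter> A" by auto
      moreover have "Xs \<tau> x \<inter> A \<in> sets Q" using A QQ.X_set_meas[OF t] by auto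
      ultimately show "(\<integral>\<omega>. h x * indicator (Xs \<tau> x \<inter> A) \<omega> \<partial>Q) = h x * QQ.prob (Xs \<tau> x \<inter> A)"
        by (simp add: Int_assoc)
    qed
  qed
  finally show ?thesis .
qed

lemma Fubini_gi:
  assumes A: "A \<in> sets Q" and st: "0 \<le> s" "s \<le> t" "t \<le> T"
  shows "(\<integral>\<omega>. indicator A \<omega> * (LINT u:{s<..t}|lborel. gi \<omega> u) \<partial>Q)
       = (LINT u:{s<..t}|lborel. (\<integral>\<omega>. indicator A \<omega> * gi \<omega> u \<partial>Q))"
proof -
  interpret PS: pair_sigma_finite Q lborel ..
  define k where "k \<omega> u = indicator A \<omega> * (indicator {s<..t} u * gi \<omega> u)" for \<omega> u
  have km: "(\<lambda>z. k (fst z) (snd z)) \<in> borel_measurable (Q \<Otimes>\<^sub>M lborel)"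
  proof -
    have "(\<lambda>z. indicator {s<..t} (snd z) * gi (fst z) (snd z)) \<in> borel_measurable (Q \<Otimes>\<^sub>M lborel)"
      by (rule joint_gi[OF refl _ order_refl]) (use T_pos st in \<open>auto intro: QQ.X_set_meas\<close>)
    moreover have "(\<lambda>z. indicator A (fst z) :: real) \<in> borel_measurable (Q \<Otimes>\<^sub>M lborel)"
      by (rule measurable_compose[OF measurable_fst]) (simp add: A borel_measurable_indicator)
    ultimately show ?thesis unfolding k_def by (rule borel_measurable_times[rotated])
  qed
  have kint: "integrable (Q \<Otimes>\<^sub>M lborel) (case_prod k)"
  proof (rule integrableI_bounded_set[where A="space Q \<times> {0..T}" and B=Kd])
    show "space Q \<times> {0..T} \<in> sets (Q \<Otimes>\<^sub>M lborel)" by (intro pair_measureI) auto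
    show "case_prod k \<in> borel_measurable (Q \<Otimes>\<^sub>M lborel)" using km by (simp add: split_beta')
    show "emeasure (Q \<Otimes>\<^sub>M lborel) (space Q \<times> {0..T}) < \<infinity>"
      by (subst lborel.emeasure_pair_measure_Times) (auto simp: QQ.emeasure_space_1 emeasure_lborel_Icc_eq)
    show "AE z in Q \<Otimes>\<^sub>M lborel. z \<in> space Q \<times> {0..T} \<longrightarrow> norm (case_prod k z) \<le> Kd"
    proof (rule AE_I2, intro impI)
      fix z :: "'w \<times> real" assume "z \<in> space Q \<times> {0..T}"
      then have u: "snd z \<in> {0..T}" by auto
      have "0 \<le> Kd" using gi_bound[OF u] by (meson abs_ge_zero order_trans)
      then show "norm (case_prod k z) \<le> Kd"
        using gi_bound[OF u, of "fst z"] by (auto simp: k_def indicator_def split_beta')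
    qed
    show "AE z in Q \<Otimes>\<^sub>M lborel. z \<notin> space Q \<times> {0..T} \<longrightarrow> case_prod k z = 0"
    proof (rule AE_I2, intro impI)
      fix z :: "'w \<times> real" assume z: "z \<in> space (Q \<Otimes>\<^sub>M lborel)" "z \<notin> space Q \<times> {0..T}"
      then have "snd z \<notin> {0..T}" by (auto simp: space_pair_measure)
      then have "snd z \<notin> {s<..t}" using st by auto
      then show "case_prod k z = 0" by (simp add: k_def split_beta')
    qed
  qed
  have "(\<integral>\<omega>. indicator A \<omega> * (LINT u:{s<..t}|lborel. gi \<omega> u) \<partial>Q) = (\<integral>\<omega>. (\<integral>u. k \<omega> u \<partial>lborel) \<partial>Q)"
    unfolding k_def set_lebesgue_integral_def by simp
  also have "\<dots> = (\<integral>u. (\<integral>\<omega>. k \<omega> u \<partial>Q) \<partial>lborel)"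
    by (rule PS.Fubini_integral[symmetric]) (rule kint)
  also have "\<dots> = (LINT u:{s<..t}|lborel. (\<integral>\<omega>. indicator A \<omega> * gi \<omega> u \<partial>Q))"
  proof -
    have "(\<integral>\<omega>. k \<omega> u \<partial>Q) = indicator {s<..t} u * (\<integral>\<omega>. indicator A \<omega> * gi \<omega> u \<partial>Q)" for u
    proof -
      have "(\<integral>\<omega>. k \<omega> u \<partial>Q) = (\<integral>\<omega>. indicator {s<..t} u * (indicator A \<omega> * gi \<omega> u) \<partial>Q)"
        unfolding k_def by (simp add: mult.left_commute)
      also have "\<dots> = indicator {s<..t} u * (\<integral>\<omega>. indicator A \<omega> * gi \<omega> u \<partial>Q)"
        by (rule integral_mult_right_zero)
      finally show ?thesis .
    qed
    then show ?thesis unfolding set_lebesgue_integral_def by simp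
  qed
  finally show ?thesis .
qed

end


lemma int_ind: "A \<in> sets M \<Longrightarrow> integrable M f \<Longrightarrow> integrable M (\<lambda>x. indicator A x * f x :: real)"
  using integrable_mult_indicator[of A M f] by simp

context main begin

lemma lsq_int: "0 \<le> v \<Longrightarrow> integrable Q (\<lambda>\<omega>. (lf Pm p0 q v (X v \<omega>))\<^sup>2)"
proof -
  assume v: "0 \<le> v"
  show ?thesis
  proof (rule QQ.integrable_const_bound[where B="Bd\<^sup>2"])
    show "(\<lambda>\<omega>. (lf Pm p0 q v (X v \<omega>))\<^sup>2) \<in> borel_measurable Q"
      by (rule measurable_compose[OF QQ.X_meas[OF v]]) simp
    show "AE \<omega> in Q. norm ((lf Pm p0 q v (X v \<omega>))\<^sup>2) \<le> Bd\<^sup>2"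
    proof (rule AE_I2)
      fix \<omega>
      have "\<bar>lf Pm p0 q v (X v \<omega>)\<bar> \<le> Bd" using lf_le_Bd[OF v] by simp
      then have "\<bar>lf Pm p0 q v (X v \<omega>)\<bar>\<^sup>2 \<le> Bd\<^sup>2" by (rule power_mono) simp
      then show "norm ((lf Pm p0 q v (X v \<omega>))\<^sup>2) \<le> Bd\<^sup>2" by simp
    qed
  qed
qed

lemma Jst_int:
  assumes A: "A \<in> sets Q" and st: "0 \<le> s" "s \<le> t" "t \<le> T"
  shows "integrable Q (\<lambda>\<omega>. indicator A \<omega> * (LINT u:{s<..t}|lborel. gi \<omega> u))"
proof (rule int_ind[OF A])
  show "integrable Q (\<lambda>\<omega>. LINT u:{s<..t}|lborel. gi \<omega> u)"
  proof (rule QQ.integrable_const_bound[where B="2 * Kd * T"])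
    have j: "(\<lambda>z. indicator {s<..t} (snd z) * gi (fst z) (snd z)) \<in> borel_measurable (Q \<Otimes>\<^sub>M lborel)"
      by (rule joint_gi[OF refl _ order_refl]) (use T_pos st in \<open>auto intro: QQ.X_set_meas\<close>)
    have "(\<lambda>\<omega>. \<integral>u. indicator {s<..t} u * gi \<omega> u \<partial>lborel) \<in> borel_measurable Q"
      by (rule lborel.borel_measurable_lebesgue_integral) (use j in \<open>simp add: split_beta'\<close>)
    then show "(\<lambda>\<omega>. LINT u:{s<..t}|lborel. gi \<omega> u) \<in> borel_measurable Q"
      by (simp add: set_lebesgue_integral_def)
    show "AE \<omega> in Q. norm (LINT u:{s<..t}|lborel. gi \<omega> u) \<le> 2 * Kd * T"
    proof (rule AE_I2)
      fix \<omega> assume w: "\<omega> \<in> space Q"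
      have "(LINT u:{s<..t}|lborel. gi \<omega> u) = (LINT u:{0..t}|lborel. gi \<omega> u) - (LINT u:{0..s}|lborel. gi \<omega> u)"
        using JI_split[OF w st] by simp
      moreover have "\<bar>LINT u:{0..t}|lborel. gi \<omega> u\<bar> \<le> Kd * t" by (rule JI_bound[OF w]) (use st in auto)
      moreover have "\<bar>LINT u:{0..s}|lborel. gi \<omega> u\<bar> \<le> Kd * s" by (rule JI_bound[OF w]) (use st in auto)
      moreover have "0 \<le> Kd" using gi_bound[of 0 \<omega>] T_pos by simp
      moreover have "Kd * t \<le> Kd * T" "Kd * s \<le> Kd * T"
        using st \<open>0 \<le> Kd\<close> by (auto intro: mult_left_mono)
      ultimately have "\<bar>LINT u:{s<..t}|lborel. gi \<omega> u\<bar> \<le> 2 * Kd * T"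
        unfolding abs_le_iff by linarith
      then show "norm (LINT u:{s<..t}|lborel. gi \<omega> u) \<le> 2 * Kd * T" by simp
    qed
  qed
qed

lemma cyl_abstract:
  fixes W :: "real \<Rightarrow> 's \<Rightarrow> real" and c :: real
  assumes A: "A \<in> sets Q" and st: "0 \<le> s" "s \<le> t" "t \<le> T"
    and rep: "\<And>v h. T - t \<le> v \<Longrightarrow> v \<le> T - s \<Longrightarrow> (\<integral>\<omega>. indicator A \<omega> * h (X v \<omega>) \<partial>Q) = c * (\<Sum>x\<in>UNIV. W v x * h x)"
    and wd: "\<And>v x. ((\<lambda>v. W v x) has_real_derivative (- (\<Sum>z\<in>UNIV. W v z * kappa_hat Pm q z x))) (at v)"
  shows "(\<integral>\<omega>. indicator A \<omega> * Yp t \<omega> \<partial>Q) = (\<integral>\<omega>. indicator A \<omega> * Yp s \<omega> \<partial>Q)"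
proof -
  define a where "a = T - t"
  define b where "b = T - s"
  have ab: "0 \<le> a" "a \<le> b" "b \<le> T" using st by (auto simp: a_def b_def)
  define Phi where "Phi v = (\<Sum>x\<in>UNIV. W v x * (lf Pm p0 q v x)\<^sup>2)" for v
  define Psi where "Psi v = (\<Sum>x\<in>UNIV. W v x * Gf Pm p0 q v x)" for v
  define J where "J \<omega> = (LINT u:{s<..t}|lborel. gi \<omega> u)" for \<omega>
  have Phi_d: "(Phi has_real_derivative (- Psi v)) (at v)" for v
    unfolding Phi_def Psi_def by (rule AN.Phi_deriv[OF wd])
  have W_cont: "isCont (\<lambda>v. W v x) v" for v x using wd by (rule DERIV_isCont)
  have Psi_cont: "isCont Psi v" for v
    unfolding Psi_def by (intro continuous_intros W_cont AN.G_cont)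
  have pw: "indicator A \<omega> * Yp t \<omega> = indicator A \<omega> * Yp s \<omega> + indicator A \<omega> * (lf Pm p0 q a (X a \<omega>))\<^sup>2
          - indicator A \<omega> * (lf Pm p0 q b (X b \<omega>))\<^sup>2 - indicator A \<omega> * J \<omega>" if w: "\<omega> \<in> space Q" for \<omega>
    using JI_split[OF w st] unfolding Yp_def J_def a_def b_def by (simp add: algebra_simps)
  have i1: "integrable Q (\<lambda>\<omega>. indicator A \<omega> * Yp s \<omega>)"
    by (rule int_ind[OF A Yp_int]) (use st in auto)
  have i2: "integrable Q (\<lambda>\<omega>. indicator A \<omega> * (lf Pm p0 q a (X a \<omega>))\<^sup>2)"
    by (rule int_ind[OF A lsq_int]) (use ab in auto)
  have i3: "integrable Q (\<lambda>\<omega>. indicator A \<omega> * (lf Pm p0 q b (X b \<omega>))\<^sup>2)"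
    by (rule int_ind[OF A lsq_int]) (use ab in auto)
  have i4: "integrable Q (\<lambda>\<omega>. indicator A \<omega> * J \<omega>)"
    unfolding J_def by (rule Jst_int[OF A st])
  have "(\<integral>\<omega>. indicator A \<omega> * Yp t \<omega> \<partial>Q) = (\<integral>\<omega>. indicator A \<omega> * Yp s \<omega> + indicator A \<omega> * (lf Pm p0 q a (X a \<omega>))\<^sup>2
          - indicator A \<omega> * (lf Pm p0 q b (X b \<omega>))\<^sup>2 - indicator A \<omega> * J \<omega> \<partial>Q)"
    by (rule Bochner_Integration.integral_cong[OF refl pw])
  also have "\<dots> = (\<integral>\<omega>. indicator A \<omega> * Yp s \<omega> \<partial>Q) + (\<integral>\<omega>. indicator A \<omega> * (lf Pm p0 q a (X a \<omega>))\<^sup>2 \<partial>Q)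
          - (\<integral>\<omega>. indicator A \<omega> * (lf Pm p0 q b (X b \<omega>))\<^sup>2 \<partial>Q) - (\<integral>\<omega>. indicator A \<omega> * J \<omega> \<partial>Q)"
    using i1 i2 i3 i4 by simp
  also have "(\<integral>\<omega>. indicator A \<omega> * (lf Pm p0 q a (X a \<omega>))\<^sup>2 \<partial>Q) = c * Phi a"
    unfolding Phi_def by (rule rep) (use st in \<open>auto simp: a_def\<close>)
  also have "(\<integral>\<omega>. indicator A \<omega> * (lf Pm p0 q b (X b \<omega>))\<^sup>2 \<partial>Q) = c * Phi b"
    unfolding Phi_def by (rule rep) (use st in \<open>auto simp: b_def\<close>)
  also have "(\<integral>\<omega>. indicator A \<omega> * J \<omega> \<partial>Q) = c * Phi a - c * Phi b"
  proof -
    have "(\<integral>\<omega>. indicator A \<omega> * J \<omega> \<partial>Q) = (LINT u:{s<..t}|lborel. (\<integral>\<omega>. indicator A \<omega> * gi \<omega> u \<partial>Q))"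
      unfolding J_def by (rule Fubini_gi[OF A st])
    also have "\<dots> = (LINT u:{s<..t}|lborel. c * Psi (T - u))"
    proof -
      have eqf: "(\<integral>\<omega>. indicator A \<omega> * gi \<omega> u \<partial>Q) = c * Psi (T - u)" if u: "u \<in> {s<..t}" for u
      proof -
        have "(\<integral>\<omega>. indicator A \<omega> * gi \<omega> u \<partial>Q) = (\<integral>\<omega>. indicator A \<omega> * (\<lambda>x. Gf Pm p0 q (T - u) x) (X (T - u) \<omega>) \<partial>Q)"
          by (simp add: gi_def)
        also have "\<dots> = c * Psi (T - u)" unfolding Psi_def by (rule rep) (use u in auto)
        finally show ?thesis .
      qed
      show ?thesis by (intro set_lebesgue_integral_cong) (simp_all add: eqf)
    qed
    also have "\<dots> = (LBINT u=s..t. c * Psi (T - u))"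
      using st by (simp add: interval_integral_Ioc)
    also have "\<dots> = c * Phi (T - t) - c * Phi (T - s)"
    proof (rule interval_integral_FTC_finite)
      show "continuous_on {min s t..max s t} (\<lambda>u. c * Psi (T - u))"
        by (intro continuous_at_imp_continuous_on ballI continuous_intros isCont_o2[OF _ Psi_cont])
      fix u
      have d1: "((\<lambda>u. T - u) has_real_derivative -1) (at u)" by (auto intro!: derivative_eq_intros)
      have "((\<lambda>u. c * Phi (T - u)) has_real_derivative c * (- Psi (T - u) * -1)) (at u)"
        by (intro DERIV_cmult DERIV_chain2[OF Phi_d d1])
      then have "((\<lambda>u. c * Phi (T - u)) has_real_derivative c * Psi (T - u)) (at u)" by simp
      then show "((\<lambda>u. c * Phi (T - u)) has_vector_derivative c * Psi (T - u)) (at u within {min s t..max s t})"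
        by (simp add: has_real_derivative_iff_has_vector_derivative has_vector_derivative_at_within)
    qed
    finally show ?thesis by (simp add: a_def b_def)
  qed
  finally show ?thesis by simp
qed

end


context main begin

lemma rep_space:
  assumes v: "0 \<le> v"
  shows "(\<integral>\<omega>. indicator (space Q) \<omega> * h (X v \<omega>) \<partial>Q) = 1 * (\<Sum>x\<in>UNIV. q x * h x)"
proof -
  have "(\<integral>\<omega>. indicator (space Q) \<omega> * h (X v \<omega>) \<partial>Q) = (\<Sum>x\<in>UNIV. h x * QQ.prob (Xs v x \<inter> space Q))"
    by (rule E_ind[OF _ v]) simp
  also have "\<dots> = (\<Sum>x\<in>UNIV. q x * h x)"
  proof (intro sum.cong refl)
    fix x
    have "Xs v x \<inter> space Q = Xs v x" by auto
    then show "h x * QQ.prob (Xs v x \<inter> space Q) = q x * h x"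
      using QQ.Xt_dist_inv[OF v inv] by simp
  qed
  finally show ?thesis by simp
qed

lemma rep_cyl:
  assumes R: "finite R" "R \<noteq> {}" "R \<subseteq> {v..}" and v: "0 \<le> v"
  shows "(\<integral>\<omega>. indicator (QQ.cyl R f) \<omega> * h (X v \<omega>) \<partial>Q)
       = QQ.prob (QQ.cyl R f) / q (f (Min R)) * (\<Sum>x\<in>UNIV. q x * Pt Pm (Min R - v) x (f (Min R)) * h x)"
proof -
  have R0: "R \<subseteq> {0..}" using R v by auto
  have "(\<integral>\<omega>. indicator (QQ.cyl R f) \<omega> * h (X v \<omega>) \<partial>Q) = (\<Sum>x\<in>UNIV. h x * QQ.prob (Xs v x \<inter> QQ.cyl R f))"
    by (rule E_ind[OF QQ.cyl_meas[OF R(1) R0] v])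
  also have "\<dots> = (\<Sum>x\<in>UNIV. h x * (q x * Pt Pm (Min R - v) x (f (Min R)) / q (f (Min R)) * QQ.prob (QQ.cyl R f)))"
    by (intro sum.cong refl) (simp add: QQ.bwd[OF inv qpos R v])
  also have "\<dots> = QQ.prob (QQ.cyl R f) / q (f (Min R)) * (\<Sum>x\<in>UNIV. q x * Pt Pm (Min R - v) x (f (Min R)) * h x)"
    by (simp add: sum_distrib_left mult_ac)
  finally show ?thesis .
qed

lemma identity_space:
  assumes st: "0 \<le> s" "s \<le> t" "t \<le> T"
  shows "(\<integral>\<omega>. indicator (space Q) \<omega> * Yp t \<omega> \<partial>Q) = (\<integral>\<omega>. indicator (space Q) \<omega> * Yp s \<omega> \<partial>Q)"
proof (rule cyl_abstract[where W="\<lambda>v x. q x" and c=1])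
  show "\<And>v h. T - t \<le> v \<Longrightarrow> v \<le> T - s \<Longrightarrow> (\<integral>\<omega>. indicator (space Q) \<omega> * h (X v \<omega>) \<partial>Q) = 1 * (\<Sum>x\<in>UNIV. q x * h x)"
    by (rule rep_space) (use st in auto)
  show "\<And>v x. ((\<lambda>v. q x) has_real_derivative - (\<Sum>z\<in>UNIV. q z * kappa_hat Pm q z x)) (at v)"
    by (rule AN.weight_b)
qed (use st in auto)

lemma identity_cyl:
  assumes st: "0 \<le> s" "s \<le> t" "t \<le> T"
    and R: "finite R" "R \<noteq> {}" "R \<subseteq> {T - s..T}"
  shows "(\<integral>\<omega>. indicator (QQ.cyl R f) \<omega> * Yp t \<omega> \<partial>Q) = (\<integral>\<omega>. indicator (QQ.cyl R f) \<omega> * Yp s \<omega> \<partial>Q)"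
proof (rule cyl_abstract[where W="\<lambda>v x. q x * Pt Pm (Min R - v) x (f (Min R))"
      and c="QQ.prob (QQ.cyl R f) / q (f (Min R))"])
  show "QQ.cyl R f \<in> sets Q" by (rule QQ.cyl_meas) (use R st in auto)
  show "\<And>v h. T - t \<le> v \<Longrightarrow> v \<le> T - s \<Longrightarrow> (\<integral>\<omega>. indicator (QQ.cyl R f) \<omega> * h (X v \<omega>) \<partial>Q)
       = QQ.prob (QQ.cyl R f) / q (f (Min R)) * (\<Sum>x\<in>UNIV. q x * Pt Pm (Min R - v) x (f (Min R)) * h x)"
    by (rule rep_cyl) (use R st in auto)
  show "\<And>v x. ((\<lambda>v. q x * Pt Pm (Min R - v) x (f (Min R))) has_real_derivative
      - (\<Sum>z\<in>UNIV. q z * Pt Pm (Min R - v) z (f (Min R)) * kappa_hat Pm q z x)) (at v)"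
    by (rule AN.weight_a)
qed (use st in auto)

definition "Cs s = {QQ.cyl R f | R f. finite R \<and> R \<subseteq> {T - s..T}} \<union> {{}}"

lemma Cs_sub: "Cs s \<subseteq> Pow (space Q)" by (auto simp: Cs_def QQ.cyl_def)

lemma Cs_Int_stable: "Int_stable (Cs s)"
proof (rule Int_stableI)
  fix A B assume A: "A \<in> Cs s" and B: "B \<in> Cs s"
  show "A \<inter> B \<in> Cs s"
  proof (cases "A = {} \<or> B = {}")
    case True then show ?thesis by (auto simp: Cs_def)
  next
    case False
    then obtain R f R' f' where AB: "A = QQ.cyl R f" "B = QQ.cyl R' f'" and
      R: "finite R" "R \<subseteq> {T - s..T}" "finite R'" "R' \<subseteq> {T - s..T}"
      using A B by (auto simp: Cs_def)
    show ?thesis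
    proof (cases "\<forall>r\<in>R \<inter> R'. f r = f' r")
      case True
      have "A \<inter> B = QQ.cyl (R \<union> R') (\<lambda>r. if r \<in> R then f r else f' r)"
        using True by (auto simp: AB QQ.cyl_def)
      then show ?thesis using R by (auto simp: Cs_def)
    next
      case False
      then have "A \<inter> B = {}" by (auto simp: AB QQ.cyl_def)
      then show ?thesis by (simp add: Cs_def)
    qed
  qed
qed

lemma gen_in: "T - s \<le> r \<Longrightarrow> r \<le> T \<Longrightarrow> {\<omega> \<in> space Q. ctmc Z N r \<omega> = y} \<in> Gens s"
  unfolding Gens_def by (rule CollectI, rule exI[of _ "T - r"], rule exI[of _ y]) simp

lemma Cs_sigma: "0 \<le> s \<Longrightarrow> s \<le> T \<Longrightarrow> sigma_sets (space Q) (Cs s) = sets (Fs s)"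
proof -
  assume s: "0 \<le> s" "s \<le> T"
  show ?thesis unfolding sets_Fs
  proof (rule sigma_sets_eqI)
    fix a assume "a \<in> Cs s"
    then consider "a = {}" | R f where "a = QQ.cyl R f" "finite R" "R \<subseteq> {T - s..T}"
      by (auto simp: Cs_def)
    then show "a \<in> sigma_sets (space Q) (Gens s)"
    proof cases
      case 1 then show ?thesis by (simp add: sigma_sets.Empty)
    next
      case 2
      have "a = space Q \<inter> (\<Inter>r\<in>R. {\<omega> \<in> space Q. ctmc Z N r \<omega> = f r})"
        using 2 by (auto simp: QQ.cyl_def)
      also have "\<dots> \<in> sigma_sets (space Q) (Gens s)"
        by (rule sigma_sets_Inter_space[OF Gens_sub 2(2)], rule sigma_sets.Basic, rule gen_in)
           (use 2 in auto)
      finally show ?thesis .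
    qed
  next
    fix b assume "b \<in> Gens s"
    then obtain u y where b: "b = {\<omega> \<in> space Q. ctmc Z N (T - u) \<omega> = y}" "0 \<le> u" "u \<le> s"
      by (auto simp: Gens_def)
    then have "b = QQ.cyl {T - u} (\<lambda>_. y)" by (auto simp: QQ.cyl_def)
    moreover have "QQ.cyl {T - u} (\<lambda>_. y) \<in> Cs s" using b by (auto simp: Cs_def)
    ultimately show "b \<in> sigma_sets (space Q) (Cs s)" by (auto intro: sigma_sets.Basic)
  qed
qed

lemma identity_all:
  assumes st: "0 \<le> s" "s \<le> t" "t \<le> T" and A: "A \<in> sets (Fs s)"
  shows "(\<integral>\<omega>\<in>A. Yp t \<omega> \<partial>Q) = (\<integral>\<omega>\<in>A. Yp s \<omega> \<partial>Q)"
proof -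
  have sT: "s \<le> T" using st by simp
  have it: "integrable Q (Yp t)" by (rule Yp_int) (use st in auto)
  have isi: "integrable Q (Yp s)" by (rule Yp_int) (use st in auto)
  have sub: "sigma_sets (space Q) (Cs s) \<subseteq> sets Q"
    using Cs_sigma[OF st(1) sT] subalg[OF sT] by (simp add: subalgebra_def)
  have SP: "(\<integral>\<omega>\<in>space Q. Yp t \<omega> \<partial>Q) = (\<integral>\<omega>\<in>space Q. Yp s \<omega> \<partial>Q)"
    using identity_space[OF st] by (simp add: set_lebesgue_integral_def)
  have "A \<in> sigma_sets (space Q) (Cs s)" using A Cs_sigma[OF st(1) sT] by simp
  with Cs_Int_stable Cs_sub show ?thesis
  proof (induct rule: sigma_sets_induct_disjoint)
    case (basic A)
    then consider "A = {}" | R f where "A = QQ.cyl R f" "finite R" "R \<subseteq> {T - s..T}"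
      by (auto simp: Cs_def)
    then show ?case
    proof cases
      case 1 then show ?thesis by (simp add: set_lebesgue_integral_def)
    next
      case 2
      show ?thesis
      proof (cases "R = {}")
        case True
        then have "A = space Q" using 2 by (auto simp: QQ.cyl_def)
        then show ?thesis using SP by simp
      next
        case False
        then show ?thesis using identity_cyl[OF st 2(2) False 2(3), of f] 2(1)
          by (simp add: set_lebesgue_integral_def)
      qed
    qed
  next
    case empty
    then show ?case by (simp add: set_lebesgue_integral_def)
  next
    case (compl A)
    have Am: "A \<in> sets Q" using compl(1) sub by auto
    have d: "(\<integral>\<omega>\<in>space Q - A. f \<omega> \<partial>Q) = (\<integral>\<omega>\<in>space Q. f \<omega> \<partial>Q) - (\<integral>\<omega>\<in>A. f \<omega> \<partial>Q)"
      if f: "integrable Q f" for f :: "'w \<Rightarrow> real"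
    proof -
      have "(\<integral>\<omega>\<in>space Q - A. f \<omega> \<partial>Q) = (\<integral>\<omega>. indicator (space Q) \<omega> * f \<omega> - indicator A \<omega> * f \<omega> \<partial>Q)"
        unfolding set_lebesgue_integral_def
        by (rule Bochner_Integration.integral_cong[OF refl])
           (use Am sets.sets_into_space in \<open>auto simp: indicator_def\<close>)
      also have "\<dots> = (\<integral>\<omega>. indicator (space Q) \<omega> * f \<omega> \<partial>Q) - (\<integral>\<omega>. indicator A \<omega> * f \<omega> \<partial>Q)"
        using int_ind[OF Am f] int_ind[OF sets.top f] by simp
      finally show ?thesis by (simp add: set_lebesgue_integral_def)
    qed
    show ?case using d[OF it] d[OF isi] SP compl(2) by simp
  next
    case (union F)
    have Fm: "\<And>i. F i \<in> sets Q" using union(2) sub by auto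
    have dj: "\<And>i j. i \<noteq> j \<Longrightarrow> F i \<inter> F j = {}" using union(1) by (auto simp: disjoint_family_on_def)
    have ca: "(\<integral>\<omega>\<in>(\<Union>i. F i). f \<omega> \<partial>Q) = (\<Sum>i. (\<integral>\<omega>\<in>F i. f \<omega> \<partial>Q))"
      if f: "integrable Q f" for f :: "'w \<Rightarrow> real"
    proof (rule lebesgue_integral_countable_add[OF Fm dj])
      have "(\<Union>i. F i) \<in> sets Q" using Fm by auto
      then show "set_integrable Q (\<Union>i. F i) f"
        unfolding set_integrable_def by (rule integrable_mult_indicator[OF _ f])
    qed
    show ?case using ca[OF it] ca[OF isi] union(3) by simp
  qed
qed

lemma martingale_Yp: "martingale Q Fs {0..T} Yp"
  unfolding martingale_def
proof (intro conjI ballI impI)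
  fix s assume s: "s \<in> {0..T}"
  show "subalgebra Q (Fs s)" using s by (intro subalg) auto
  show "Yp s \<in> borel_measurable (Fs s)" using s by (intro Yp_meas) auto
  show "integrable Q (Yp s)" using s by (intro Yp_int) auto
next
  fix s t assume "s \<in> {0..T}" "t \<in> {0..T}" "s \<le> t"
  then show "sets (Fs s) \<subseteq> sets (Fs t)" by (intro Fs_mono)
next
  fix s t assume s: "s \<in> {0..T}" and t: "t \<in> {0..T}" and st: "s \<le> t"
  interpret FMS: finite_measure_subalgebra Q "Fs s"
    by (rule finite_measure_subalgebra.intro[OF QQ.finite_measure_axioms])
       (rule finite_measure_subalgebra_axioms.intro, use s in \<open>auto intro: subalg\<close>)
  show "AE \<omega> in Q. real_cond_exp Q (Fs s) (Yp t) \<omega> = Yp s \<omega>"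
  proof (rule FMS.real_cond_exp_charact)
    show "\<And>A. A \<in> sets (Fs s) \<Longrightarrow> (\<integral>\<omega>\<in>A. Yp t \<omega> \<partial>Q) = (\<integral>\<omega>\<in>A. Yp s \<omega> \<partial>Q)"
      by (rule identity_all) (use s t st in auto)
    show "integrable Q (Yp t)" using t by (intro Yp_int) auto
    show "integrable Q (Yp s)" using s by (intro Yp_int) auto
    show "Yp s \<in> borel_measurable (Fs s)" using s by (intro Yp_meas) auto
  qed
qed

end


lemma martingale_cong:
  assumes "\<And>s. s \<in> I \<Longrightarrow> Y s = Y' s" and "martingale M F I Y'"
  shows "martingale M F I Y"
  using assms(2) unfolding martingale_def by (simp add: assms(1))

theorem proposition6p1:
  fixes Pm :: "'s::finite \<Rightarrow> 's \<Rightarrow> real"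
    and q p0 :: "'s \<Rightarrow> real"
    and P Q :: "'w measure"
    and Z :: "nat \<Rightarrow> 'w \<Rightarrow> 's"
    and N :: "real \<Rightarrow> 'w \<Rightarrow> nat"
    and T :: real
  assumes stoch: "stochastic_matrix Pm"
    and irred: "irreducible_matrix Pm"
    and inv: "invariant_distribution Pm q"
    and p0_dist: "prob_vector p0" and p0_pos: "\<forall>x. 0 < p0 x"
    and P_setting: "uniformized_chain_setting P Z N p0 Pm"
    and Q_setting: "uniformized_chain_setting Q Z N q Pm"
    and T_pos: "0 < T"
  shows "martingale Q
           (natural_filtration Q (\<lambda>s. ctmc Z N (T - s)))
           {0..T}
           (\<lambda>s \<omega>. (lratio P Z N q (T - s) (ctmc Z N (T - s) \<omega>))\<^sup>2
                 - (LINT u:{0..s}|lborel.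
                      (let x = ctmc Z N (T - u) \<omega> in
                        \<Sum>y\<in>UNIV - {x}. kappa_hat Pm q x y
                            * (lratio P Z N q (T - u) y - lratio P Z N q (T - u) x)\<^sup>2)))"
proof -
  interpret main Pm q p0 P Q Z N T
    using stoch irred inv P_setting Q_setting T_pos by unfold_locales
  show ?thesis
  proof (rule martingale_cong[OF _ martingale_Yp])
    fix s assume s: "s \<in> {0..T}"
    show "(\<lambda>\<omega>. (lratio P Z N q (T - s) (ctmc Z N (T - s) \<omega>))\<^sup>2
                 - (LINT u:{0..s}|lborel.
                      (let x = ctmc Z N (T - u) \<omega> in
                        \<Sum>y\<in>UNIV - {x}. kappa_hat Pm q x y
                            * (lratio P Z N q (T - u) y - lratio P Z N q (T - u) x)\<^sup>2))) = Yp s"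
    proof (rule ext)
      fix \<omega>
      have a: "lratio P Z N q (T - s) (ctmc Z N (T - s) \<omega>) = lf Pm p0 q (T - s) (X (T - s) \<omega>)"
        using s by (intro lratio_eq) auto
      have b: "(LINT u:{0..s}|lborel.
                      (let x = ctmc Z N (T - u) \<omega> in
                        \<Sum>y\<in>UNIV - {x}. kappa_hat Pm q x y
                            * (lratio P Z N q (T - u) y - lratio P Z N q (T - u) x)\<^sup>2))
             = (LINT u:{0..s}|lborel. gi \<omega> u)"
      proof -
        have eqf: "(let x = ctmc Z N (T - u) \<omega> in
                        \<Sum>y\<in>UNIV - {x}. kappa_hat Pm q x y
                            * (lratio P Z N q (T - u) y - lratio P Z N q (T - u) x)\<^sup>2) = gi \<omega> u"
          if u: "u \<in> {0..s}" for u
        proof -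
          have "0 \<le> T - u" using s u by auto
          then show ?thesis by (simp add: Let_def gi_def Gf_def lratio_eq)
        qed
        show ?thesis by (intro set_lebesgue_integral_cong) (simp_all add: eqf)
      qed
      show "(lratio P Z N q (T - s) (ctmc Z N (T - s) \<omega>))\<^sup>2
                 - (LINT u:{0..s}|lborel.
                      (let x = ctmc Z N (T - u) \<omega> in
                        \<Sum>y\<in>UNIV - {x}. kappa_hat Pm q x y
                            * (lratio P Z N q (T - u) y - lratio P Z N q (T - u) x)\<^sup>2)) = Yp s \<omega>"
        unfolding a b Yp_def ..
    qed
  qed
qed


end
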